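(* Fix $l\in(0,1/2)$, $0<\alpha<\beta<1$ and $\delta>0$. For $\varepsilon>0$ let $S=S_{N,\varepsilon}:=\{(x,y)\in V_N^l\times V_N^l:\ N^{\beta(1-\varepsilon)}\le|x-y|\le N^\beta\}$ and $\gamma^*=2/(2-\beta)$. Then there exist $C,\varepsilon_0>0$ such that for all $\varepsilon\le\varepsilon_0$ and all $N$, $$\max_{(x,y)\in S}\mathbf P(x,y\in\mathcal H_N(\alpha))\le C N^{-2\alpha^2F_{2,\beta}(\gamma^* )+\delta}.$$ Moreover $\varepsilon_0$ can be chosen uniformly in $(\alpha,\beta)$ over compact subsets of $(0,1)^2$.
   Context: For an integer $N\ge1$ let $V_N=\{1,\dots,N\}^2\subset\mathbb Z^2$, let $\partial V_N$ be the set of points of $V_N$ having a nearest neighbour outside $V_N$, and $\mathrm{int}(V_N)=V_N\setminus\partial V_N$. The two-dimensional discrete Gaussian free field (GFF) on $V_N$ is the centered Gaussian family $\Phi=(\Phi_x)_{x\in V_N}$ (under a probability $\mathbf P$) with $\Phi_x=0$ for $x\in\partial V_N$ and covariance $\mathrm{Cov}(\Phi_x,\Phi_y)=G_N(x,y)=\mathbb E_x\big(\sum_{i=0}^{\tau_{\partial V_N}}\mathbf 1_{\{\eta_i=y\}}\big)$ for $x,y\in\mathrm{int}(V_N)$, where $(\eta_i)_{i\ge0}$ is simple random walk on $\mathbb Z^2$ started at $x$ and $\tau_{\partial V_N}=\inf\{i\ge0:\eta_i\in\partial V_N\}$. Let $g=2/\pi$ and $\log$ the natural logarithm. For $l\in(0,1/2)$,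 $V_N^l:=\{x\in V_N:\mathrm{dist}(x,V_N^c)\ge lN\}$, and for $\eta\in(0,1)$, $\mathcal H_N(\eta):=\{x\in V_N^l:\Phi_x\ge 2\sqrt g\,\eta\log N\}$. For $h\ge0$, $F_{h,\beta}(\gamma)=\gamma^2(1-\beta)+h(1-\gamma(1-\beta))^2/\beta$. *)

theory Defs
  imports "HOL-Probability.Probability"
begin

type_synonym pt = "int \<times> int"

definition VN :: "nat \<Rightarrow> pt set" where
  "VN N = {1..int N} \<times> {1..int N}"

definition nbrs :: "pt \<Rightarrow> pt set" where
  "nbrs x = {(fst x + 1, snd x), (fst x - 1, snd x), (fst x, snd x + 1), (fst x, snd x - 1)}"

definition bdry :: "nat \<Rightarrow> pt set" where
  "bdry N = {x \<in> VN N. \<exists>z \<in> nbrs x. z \<notin> VN N}"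

definition intV :: "nat \<Rightarrow> pt set" where
  "intV N = VN N - bdry N"

definition ptnorm :: "pt \<Rightarrow> real" where
  "ptnorm x = sqrt ((real_of_int (fst x))\<^sup>2 + (real_of_int (snd x))\<^sup>2)"

text \<open>Killed-walk kernel: probability that simple random walk from x is at y at time n
  and has stayed in the interior at all times 0..n (i.e. n \<le> tau and eta_n = y, y interior).\<close>
fun killed :: "nat \<Rightarrow> nat \<Rightarrow> pt \<Rightarrow> pt \<Rightarrow> real" where
  "killed N 0 x y = (if x = y \<and> x \<in> intV N then 1 else 0)"
| "killed N (Suc n) x y =
     (if x \<in> intV N then
        (killed N n (fst x + 1, snd x) y + killed N n (fst x - 1, snd x) y
         + killed N n (fst x, snd x + 1) y + killed N n (fst x, snd x - 1) y) / 4
      else 0)"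

text \<open>Green function G_N(x,y) = E_x (number of visits to y up to tau).\<close>
definition green :: "nat \<Rightarrow> pt \<Rightarrow> pt \<Rightarrow> real" where
  "green N x y = (\<Sum>n. killed N n x y)"

definition centered_gaussian :: "'a measure \<Rightarrow> ('a \<Rightarrow> real) \<Rightarrow> real \<Rightarrow> bool" where
  "centered_gaussian M X v \<longleftrightarrow> X \<in> borel_measurable M \<and> v \<ge> 0 \<and>
     (if v = 0 then (AE \<omega> in M. X \<omega> = 0)
      else distributed M lborel X (normal_density 0 (sqrt v)))"

definition is_dgff :: "'a measure \<Rightarrow> nat \<Rightarrow> (pt \<Rightarrow> 'a \<Rightarrow> real) \<Rightarrow> bool" where
  "is_dgff M N \<Phi> \<longleftrightarrow> prob_space M \<and>
     (\<forall>x. \<Phi> x \<in> borel_measurable M) \<and>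
     (\<forall>x \<in> bdry N. \<forall>\<omega> \<in> space M. \<Phi> x \<omega> = 0) \<and>
     (\<forall>c :: pt \<Rightarrow> real. centered_gaussian M (\<lambda>\<omega>. \<Sum>x\<in>intV N. c x * \<Phi> x \<omega>)
        (\<Sum>x\<in>intV N. \<Sum>y\<in>intV N. c x * c y * green N x y))"

definition gconst :: real where "gconst = 2 / pi"

definition distc :: "nat \<Rightarrow> pt \<Rightarrow> real" where
  "distc N x = Inf {ptnorm (x - z) | z. z \<notin> VN N}"

definition VNl :: "nat \<Rightarrow> real \<Rightarrow> pt set" where
  "VNl N l = {x \<in> VN N. distc N x \<ge> l * real N}"

definition HN :: "nat \<Rightarrow> real \<Rightarrow> real \<Rightarrow> (pt \<Rightarrow> 'a \<Rightarrow> real) \<Rightarrow> 'a \<Rightarrow> pt set" where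
  "HN N l \<eta> \<Phi> \<omega> = {x \<in> VNl N l. \<Phi> x \<omega> \<ge> 2 * sqrt gconst * \<eta> * ln (real N)}"

definition Ffun :: "real \<Rightarrow> real \<Rightarrow> real \<Rightarrow> real" where
  "Ffun h \<beta> \<gamma> = \<gamma>\<^sup>2 * (1 - \<beta>) + h * (1 - \<gamma> * (1 - \<beta>))\<^sup>2 / \<beta>"

definition Sset :: "nat \<Rightarrow> real \<Rightarrow> real \<Rightarrow> real \<Rightarrow> (pt \<times> pt) set" where
  "Sset N l \<beta> \<epsilon> = {(x, y). x \<in> VNl N l \<and> y \<in> VNl N l \<and>
      real N powr (\<beta> * (1 - \<epsilon>)) \<le> ptnorm (x - y) \<and> ptnorm (x - y) \<le> real N powr \<beta>}"

end

theory Submission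
  imports Defs "HOL-Real_Asymp.Real_Asymp"
begin

lemma finite_VN: "finite (VN N)"
  unfolding VN_def by auto

lemma finite_intV: "finite (intV N)"
  unfolding intV_def using finite_VN by auto

lemma intV_nbrs:
  assumes "x \<in> intV N"
  shows "(fst x + 1, snd x) \<in> VN N" "(fst x - 1, snd x) \<in> VN N"
        "(fst x, snd x + 1) \<in> VN N" "(fst x, snd x - 1) \<in> VN N"
  using assms unfolding intV_def bdry_def nbrs_def by auto

lemma intV_VN: "x \<in> intV N \<Longrightarrow> x \<in> VN N"
  unfolding intV_def by auto

lemma killed_nonneg: "0 \<le> killed N n x y"
  by (induction n arbitrary: x) auto

lemma killed_out: "x \<notin> intV N \<Longrightarrow> killed N n x y = 0"
  by (cases n) auto

lemma killed_out2: "y \<notin> intV N \<Longrightarrow> killed N n x y = 0"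
  by (induction n arbitrary: x) auto

lemma killed_CK:
  "killed N (n + m) x y = (\<Sum>w\<in>intV N. killed N n x w * killed N m w y)"
proof (induction n arbitrary: x)
  case 0
  have "(\<Sum>w\<in>intV N. killed N 0 x w * killed N m w y)
      = (\<Sum>w\<in>intV N. (if w = x then killed N m x y else 0))"
    by (rule sum.cong) (auto simp: killed_out)
  also have "\<dots> = killed N m x y"
    using finite_intV[of N] by (auto simp: killed_out)
  finally show ?case by simp
next
  case (Suc n)
  show ?case
  proof (cases "x \<in> intV N")
    case True
    have "killed N (Suc n + m) x y =
      (killed N (n+m) (fst x + 1, snd x) y + killed N (n+m) (fst x - 1, snd x) y
         + killed N (n+m) (fst x, snd x + 1) y + killed N (n+m) (fst x, snd x - 1) y) / 4"
      using True by simp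
    also have "\<dots> = (\<Sum>w\<in>intV N. (killed N n (fst x + 1, snd x) w + killed N n (fst x - 1, snd x) w
         + killed N n (fst x, snd x + 1) w + killed N n (fst x, snd x - 1) w) / 4 * killed N m w y)"
      unfolding Suc.IH
      by (simp add: sum.distrib[symmetric] sum_divide_distrib[symmetric] algebra_simps)
    also have "\<dots> = (\<Sum>w\<in>intV N. killed N (Suc n) x w * killed N m w y)"
      using True by simp
    finally show ?thesis .
  next
    case False
    then show ?thesis by (simp add: killed_out)
  qed
qed

definition surv :: "nat \<Rightarrow> nat \<Rightarrow> pt \<Rightarrow> real" where
  "surv N n x = (\<Sum>w\<in>intV N. killed N n x w)"

lemma surv_nonneg: "0 \<le> surv N n x"
  unfolding surv_def by (intro sum_nonneg killed_nonneg)

lemma surv_out: "x \<notin> intV N \<Longrightarrow> surv N n x = 0"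
  unfolding surv_def by (simp add: killed_out)

lemma surv_0: "surv N 0 x = (if x \<in> intV N then 1 else 0)"
  unfolding surv_def using finite_intV[of N] by (auto simp: if_distrib sum.delta cong: if_cong)

lemma surv_Suc: "x \<in> intV N \<Longrightarrow> surv N (Suc n) x =
   (surv N n (fst x + 1, snd x) + surv N n (fst x - 1, snd x) + surv N n (fst x, snd x + 1) + surv N n (fst x, snd x - 1)) / 4"
  unfolding surv_def by (simp add: sum.distrib[symmetric] sum_divide_distrib[symmetric])

lemma surv_le1: "surv N n x \<le> 1"
proof (induction n arbitrary: x)
  case 0 then show ?case by (simp add: surv_0)
next
  case (Suc n)
  then show ?case
  proof (cases "x \<in> intV N")
    case True
    have "surv N n (fst x + 1, snd x) + surv N n (fst x - 1, snd x) + surv N n (fst x, snd x + 1) + surv N n (fst x, snd x - 1) \<le> 4"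
      using Suc.IH by (smt (verit))
    then show ?thesis using True by (simp add: surv_Suc)
  qed (simp add: surv_out)
qed

lemma surv_mono_Suc: "surv N (Suc n) x \<le> surv N n x"
proof -
  have "surv N (Suc n) x = (\<Sum>w\<in>intV N. \<Sum>v\<in>intV N. killed N n x v * killed N 1 v w)"
    unfolding surv_def using killed_CK[of N n 1] by simp
  also have "\<dots> = (\<Sum>v\<in>intV N. killed N n x v * surv N 1 v)"
    unfolding surv_def by (subst sum.swap) (simp add: sum_distrib_left)
  also have "\<dots> \<le> (\<Sum>v\<in>intV N. killed N n x v)"
    by (intro sum_mono) (metis killed_nonneg mult.right_neutral mult_left_mono surv_le1)
  finally show ?thesis unfolding surv_def .
qed

lemma surv_antimono: "m \<le> n \<Longrightarrow> surv N n x \<le> surv N m x"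
  by (induction n rule: dec_induct) (auto intro: order_trans[OF surv_mono_Suc])

definition hfun :: "nat \<Rightarrow> pt \<Rightarrow> real" where
  "hfun N x = (real N)^2 - (real_of_int (fst x) - (real N + 1)/2)^2"

lemma hfun_nonneg: "x \<in> VN N \<Longrightarrow> 0 \<le> hfun N x"
proof -
  assume "x \<in> VN N"
  then have a: "1 \<le> fst x" "fst x \<le> int N" unfolding VN_def by auto
  then have "1 \<le> real_of_int (fst x)" "real_of_int (fst x) \<le> real N" by linarith+
  then have b: "1 \<le> real_of_int (fst x)" "real_of_int (fst x) \<le> real N" .
  have c: "0 \<le> real N" by simp
  have "real_of_int (fst x) - (real N + 1)/2 \<le> real N" using b c by argo
  moreover have "-(real_of_int (fst x) - (real N + 1)/2) \<le> real N" using b c by argo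
  ultimately have "\<bar>real_of_int (fst x) - (real N + 1)/2\<bar> \<le> real N" by (simp only: abs_le_iff)
  then have "(real_of_int (fst x) - (real N + 1)/2)^2 \<le> (real N)^2"
    by (metis abs_le_square_iff abs_of_nat)
  then show ?thesis unfolding hfun_def by simp
qed

lemma hfun_le: "hfun N x \<le> (real N)^2"
  unfolding hfun_def by simp

lemma exit_time: "x \<in> VN N \<Longrightarrow> (\<Sum>m<n. surv N m x) \<le> 2 * hfun N x"
proof (induction n arbitrary: x)
  case 0 then show ?case using hfun_nonneg[of x N] by simp
next
  case (Suc n)
  show ?case
  proof (cases "x \<in> intV N")
    case False
    then show ?thesis using hfun_nonneg[OF Suc.prems] by (simp add: surv_out)
  next
    case True
    let ?a = "(fst x + 1, snd x)" and ?b = "(fst x - 1, snd x)" and ?c = "(fst x, snd x + 1)" and ?d = "(fst x, snd x - 1)"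
    have "(\<Sum>m<Suc n. surv N m x) = surv N 0 x + (\<Sum>m<n. surv N (Suc m) x)"
      by (rule sum.lessThan_Suc_shift)
    also have "\<dots> = 1 + ((\<Sum>m<n. surv N m ?a) + (\<Sum>m<n. surv N m ?b) + (\<Sum>m<n. surv N m ?c) + (\<Sum>m<n. surv N m ?d)) / 4"
      using True by (simp add: surv_0 surv_Suc sum.distrib[symmetric] sum_divide_distrib[symmetric])
    also have "\<dots> \<le> 1 + (2 * hfun N ?a + 2 * hfun N ?b + 2 * hfun N ?c + 2 * hfun N ?d) / 4"
      using Suc.IH[OF intV_nbrs(1)[OF True]] Suc.IH[OF intV_nbrs(2)[OF True]]
        Suc.IH[OF intV_nbrs(3)[OF True]] Suc.IH[OF intV_nbrs(4)[OF True]] by simp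
    also have "\<dots> = 2 * hfun N x"
      unfolding hfun_def by (simp add: power2_eq_square field_simps)
    finally show ?thesis .
  qed
qed

lemma exit_time': "(\<Sum>m<n. surv N m x) \<le> 2 * (real N)^2"
proof (cases "x \<in> VN N")
  case True then show ?thesis using exit_time[OF True, where n=n] hfun_le[of N x] by linarith
next
  case False
  then have "x \<notin> intV N" using intV_VN by blast
  then show ?thesis by (simp add: surv_out)
qed

lemma killed_le_surv: "killed N n x y \<le> surv N n x"
proof (cases "y \<in> intV N")
  case True
  then show ?thesis unfolding surv_def
    using finite_intV member_le_sum[of y "intV N" "killed N n x"] killed_nonneg by blast
qed (simp add: killed_out2 surv_nonneg)

lemma killed_summable: "summable (\<lambda>n. killed N n x y)"
proof (rule summableI_nonneg_bounded[where x="2 * (real N)^2"])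
  fix n
  show "(\<Sum>m<n. killed N m x y) \<le> 2 * (real N)^2"
    using exit_time'[where n=n and N=N and x=x] sum_mono[of "{..<n}" "\<lambda>m. killed N m x y" "\<lambda>m. surv N m x"] killed_le_surv
    by (smt (verit))
qed (rule killed_nonneg)

lemma green_nonneg: "0 \<le> green N x y"
  unfolding green_def by (intro suminf_nonneg killed_summable killed_nonneg)

lemma surv_T: "real T * surv N T x \<le> 2 * (real N)^2"
proof -
  have "real T * surv N T x = (\<Sum>m<T. surv N T x)" by simp
  also have "\<dots> \<le> (\<Sum>m<T. surv N m x)" by (intro sum_mono surv_antimono) simp
  finally show ?thesis using exit_time'[where n=T and N=N and x=x] by linarith
qed

lemma green_split:
  "green N x y = (\<Sum>n<T. killed N n x y) + (\<Sum>w\<in>intV N. killed N T x w * green N w y)"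
proof -
  have "green N x y = (\<Sum>n. killed N (n + T) x y) + (\<Sum>n<T. killed N n x y)"
    unfolding green_def by (rule suminf_split_initial_segment[OF killed_summable])
  also have "(\<Sum>n. killed N (n + T) x y) = (\<Sum>n. \<Sum>w\<in>intV N. killed N T x w * killed N n w y)"
  proof -
    have "\<And>n. killed N (n + T) x y = (\<Sum>w\<in>intV N. killed N T x w * killed N n w y)"
      using killed_CK[of N T] by (simp add: add.commute)
    then show ?thesis by simp
  qed
  also have "\<dots> = (\<Sum>w\<in>intV N. \<Sum>n. killed N T x w * killed N n w y)"
    by (rule suminf_sum) (intro summable_mult killed_summable)
  also have "\<dots> = (\<Sum>w\<in>intV N. killed N T x w * green N w y)"
    unfolding green_def by (intro sum.cong refl suminf_mult killed_summable)
  finally show ?thesis by simp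
qed

lemma green_split_le:
  assumes "\<And>w. w \<in> intV N \<Longrightarrow> green N w y \<le> M"
  shows "green N x y \<le> (\<Sum>n<T. killed N n x y) + surv N T x * M"
proof -
  have "(\<Sum>w\<in>intV N. killed N T x w * green N w y) \<le> (\<Sum>w\<in>intV N. killed N T x w * M)"
    by (intro sum_mono mult_left_mono assms killed_nonneg)
  then show ?thesis unfolding green_split[of N x y T] surv_def by (simp add: sum_distrib_right)
qed

definition qc :: "nat \<Rightarrow> int \<Rightarrow> real" where
  "qc n j = (if - int n \<le> j \<and> j \<le> int n \<and> even (int n + j)
             then real (n choose nat ((int n + j) div 2)) / 2^n else 0)"

lemma qc_nonneg: "0 \<le> qc n j"
  unfolding qc_def by auto

lemma qc_0: "qc 0 j = (if j = 0 then 1 else 0)"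
  unfolding qc_def by auto

lemma qc_odd: "odd (int n + j) \<Longrightarrow> qc n j = 0"
  unfolding qc_def by auto

lemma qc_idx:
  assumes "i \<le> n"
  shows "qc n (2 * int i - int n) = real (n choose i) / 2^n"
proof -
  have "(int n + (2 * int i - int n)) div 2 = int i" by simp
  then show ?thesis unfolding qc_def using assms by auto
qed

lemma qc_out: "j < - int n \<or> j > int n \<Longrightarrow> qc n j = 0"
  unfolding qc_def by auto

lemma qc_rec: "qc (Suc n) j = (qc n (j - 1) + qc n (j + 1)) / 2"
proof (cases "even (int n + 1 + j)")
  case False
  then have "odd (int (Suc n) + j)" "odd (int n + (j - 1))" "odd (int n + (j + 1))" by auto
  then show ?thesis by (simp add: qc_odd)
next
  case True
  then obtain i :: int where i: "int n + 1 + j = 2 * i" by (metis evenE)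
  show ?thesis
  proof (cases "0 \<le> i \<and> i \<le> int n + 1")
    case False
    then have "j < - int (Suc n) \<or> j > int (Suc n)" "j - 1 < - int n \<or> j - 1 > int n" "j + 1 < - int n \<or> j + 1 > int n"
      using i by auto
    then show ?thesis by (simp add: qc_out)
  next
    case True
    define k where "k = nat i"
    have ik: "i = int k" using True k_def by simp
    have kn: "k \<le> Suc n" using True ik by simp
    have j: "j = 2 * int k - int (Suc n)" using i ik by simp
    have lhs: "qc (Suc n) j = real (Suc n choose k) / 2^(Suc n)"
      unfolding j by (rule qc_idx[OF kn])
    show ?thesis
    proof (cases k)
      case 0
      then have "j - 1 < - int n" using j by simp
      then have a: "qc n (j - 1) = 0" by (simp add: qc_out)
      have "j + 1 = 2 * int 0 - int n" using j 0 by simp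
      then have b: "qc n (j + 1) = 1 / 2^n" using qc_idx[of 0 n] by simp
      show ?thesis using lhs a b 0 by simp
    next
      case (Suc k')
      have a: "qc n (j - 1) = real (n choose k') / 2^n"
      proof -
        have "j - 1 = 2 * int k' - int n" using j Suc by simp
        moreover have "k' \<le> n" using kn Suc by simp
        ultimately show ?thesis using qc_idx by simp
      qed
      have b: "qc n (j + 1) = real (n choose k) / 2^n"
      proof (cases "k \<le> n")
        case True
        have "j + 1 = 2 * int k - int n" using j by simp
        then show ?thesis using qc_idx[OF True] by simp
      next
        case False
        then have "j + 1 > int n" using j by simp
        then show ?thesis using False by (simp add: qc_out)
      qed
      have "Suc n choose k = (n choose k') + (n choose k)" using Suc by simp
      then have c: "real (Suc n choose k) = real (n choose k') + real (n choose k)" by simp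
      show ?thesis unfolding lhs a b c by (simp add: field_simps)
    qed
  qed
qed

definition cw :: "nat \<Rightarrow> real" where
  "cw n = real (n choose (n div 2)) / 2^n"

lemma qc_le_cw: "qc n j \<le> cw n"
  unfolding qc_def cw_def using binomial_maximum
  by (auto intro!: divide_right_mono)

lemma cw_Suc_le: "cw (Suc n) \<le> cw n"
proof -
  have "Suc n choose (Suc n div 2) \<le> 2 * (n choose (n div 2))"
  proof (cases "Suc n div 2")
    case 0
    then show ?thesis by simp
  next
    case (Suc k)
    then have "Suc n choose (Suc n div 2) = (n choose k) + (n choose Suc k)" by simp
    also have "\<dots> \<le> 2 * (n choose (n div 2))" using binomial_maximum[of n k] binomial_maximum[of n "Suc k"] by simp
    finally show ?thesis .
  qed
  then have "real (Suc n choose (Suc n div 2)) \<le> 2 * real (n choose (n div 2))"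
    by (metis of_nat_le_iff of_nat_mult of_nat_numeral)
  then show ?thesis unfolding cw_def by (simp add: field_simps)
qed

lemma cw_antimono: "m \<le> n \<Longrightarrow> cw n \<le> cw m"
  by (induction n rule: dec_induct) (auto intro: order_trans[OF cw_Suc_le])

lemma cw_nonneg: "0 \<le> cw n"
  unfolding cw_def by simp

lemma cw_le1: "cw n \<le> 1"
  using cw_antimono[of 0 n] by (simp add: cw_def)

lemma qc_le1: "qc n j \<le> 1"
  using qc_le_cw cw_le1 order_trans by blast

definition Fd :: "nat \<Rightarrow> int \<Rightarrow> int \<Rightarrow> real" where
  "Fd n a b = qc n (a + b) * qc n (a - b)"

lemma Fd_nonneg: "0 \<le> Fd n a b"
  unfolding Fd_def by (simp add: qc_nonneg)

lemma Fd_Suc: "Fd (Suc n) a b = (Fd n (a - 1) b + Fd n (a + 1) b + Fd n a (b - 1) + Fd n a (b + 1)) / 4"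
proof -
  have e: "a - 1 + b = a + b - 1" "a - 1 - b = a - b - 1" "a + 1 + b = a + b + 1" "a + 1 - b = a - b + 1"
    "a + (b - 1) = a + b - 1" "a - (b - 1) = a - b + 1" "a + (b + 1) = a + b + 1" "a - (b + 1) = a - b - 1"
    by simp_all
  show ?thesis unfolding Fd_def qc_rec e by (simp add: field_simps)
qed

lemma killed_le_Fd: "killed N n x y \<le> Fd n (fst y - fst x) (snd y - snd x)"
proof (induction n arbitrary: x)
  case 0
  show ?case
  proof (cases "x = y")
    case True then show ?thesis by (simp add: Fd_def qc_0)
  next
    case False then show ?thesis by (simp add: Fd_nonneg)
  qed
next
  case (Suc n)
  show ?case
  proof (cases "x \<in> intV N")
    case True
    have "killed N (Suc n) x y \<le> (Fd n (fst y - (fst x + 1)) (snd y - snd x) + Fd n (fst y - (fst x - 1)) (snd y - snd x)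
       + Fd n (fst y - fst x) (snd y - (snd x + 1)) + Fd n (fst y - fst x) (snd y - (snd x - 1))) / 4"
      using True Suc.IH[of "(fst x + 1, snd x)"] Suc.IH[of "(fst x - 1, snd x)"]
        Suc.IH[of "(fst x, snd x + 1)"] Suc.IH[of "(fst x, snd x - 1)"] by simp
    also have "\<dots> = Fd (Suc n) (fst y - fst x) (snd y - snd x)"
      unfolding Fd_Suc by (simp add: algebra_simps diff_diff_eq2)
    finally show ?thesis .
  qed (simp add: Fd_nonneg)
qed

lemma Fd_odd: "odd (int n + a + b) \<Longrightarrow> Fd n a b = 0"
  unfolding Fd_def using qc_odd[of n "a + b"] by (simp add: add.assoc)

lemma Fd_le_cw: "Fd n a b \<le> (cw (2 * (n div 2)))^2"
proof -
  have "qc n j \<le> cw (2 * (n div 2))" for j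
    using qc_le_cw[of n j] cw_antimono[of "2 * (n div 2)" n] by simp
  then show ?thesis unfolding Fd_def power2_eq_square
    by (intro mult_mono) (auto simp: qc_nonneg cw_nonneg)
qed

lemma cosh_bound:
  fixes l :: real
  assumes "\<bar>l\<bar> \<le> 1"
  shows "(exp l + exp (-l)) / 2 \<le> 1 + l^2"
proof -
  have key: "exp t + exp (-t) \<le> 2 + 2 * t^2" if t: "0 \<le> t" "t \<le> 1" for t :: real
  proof -
    have e1: "exp t \<le> 1 + t + t^2" using exp_bound t by blast
    have "1 + t \<le> exp t" by simp
    then have "exp (-t) * (1 + t) \<le> exp (-t) * exp t" by (intro mult_left_mono) auto
    then have "exp (-t) * (1 + t) \<le> 1" by (simp add: exp_minus_inverse mult.commute)
    moreover have "(1 - t + t^2) * (1 + t) = 1 + t^3" by (simp add: power2_eq_square power3_eq_cube algebra_simps)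
    moreover have "1 \<le> 1 + t^3" using t by simp
    ultimately have "exp (-t) * (1 + t) \<le> (1 - t + t^2) * (1 + t)" by linarith
    then have e2: "exp (-t) \<le> 1 - t + t^2" using t by (simp add: mult_le_cancel_right_pos)
    show ?thesis using e1 e2 by linarith
  qed
  show ?thesis
  proof (cases "0 \<le> l")
    case True then show ?thesis using key[of l] assms by simp
  next
    case False then show ?thesis using key[of "-l"] assms by (simp add: add.commute)
  qed
qed

lemma qc_chernoff: "qc n j \<le> ((exp l + exp (-l)) / 2)^n * exp (- l * real_of_int j)"
proof (induction n arbitrary: j)
  case 0
  then show ?case by (simp add: qc_0)
next
  case (Suc n)
  let ?c = "(exp l + exp (-l)) / 2"
  have "qc (Suc n) j = (qc n (j - 1) + qc n (j + 1)) / 2" by (rule qc_rec)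
  also have "\<dots> \<le> (?c^n * exp (- l * real_of_int (j - 1)) + ?c^n * exp (- l * real_of_int (j + 1))) / 2"
    using Suc.IH[of "j - 1"] Suc.IH[of "j + 1"] by simp
  also have "\<dots> = ?c^n * exp (- l * real_of_int j) * ?c"
  proof -
    have "exp (- l * real_of_int (j - 1)) = exp (- l * real_of_int j) * exp l"
      by (simp add: exp_add[symmetric] algebra_simps)
    moreover have "exp (- l * real_of_int (j + 1)) = exp (- l * real_of_int j) * exp (-l)"
      by (simp add: exp_add[symmetric] algebra_simps)
    ultimately show ?thesis by (simp add: algebra_simps add_divide_distrib)
  qed
  also have "\<dots> = ?c^(Suc n) * exp (- l * real_of_int j)" by simp
  finally show ?case .
qed

lemma qc_gauss:
  assumes "n \<ge> 1"
  shows "qc n j \<le> exp (- ((real_of_int j)^2) / (4 * real n))"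
proof (cases "j < - int n \<or> j > int n")
  case True then show ?thesis by (simp add: qc_out)
next
  case False
  then have jn: "\<bar>real_of_int j\<bar> \<le> real n" by auto
  define l where "l = real_of_int j / (2 * real n)"
  have np: "real n > 0" using assms by simp
  have "\<bar>l\<bar> = \<bar>real_of_int j\<bar> / (2 * real n)" unfolding l_def using np by (simp add: abs_divide)
  also have "\<dots> \<le> 1" using jn np by (subst divide_le_eq_1_pos) auto
  finally have l1: "\<bar>l\<bar> \<le> 1" .
  have c0: "0 \<le> (exp l + exp (-l)) / 2" by (simp add: add_nonneg_nonneg)
  have cle: "(exp l + exp (-l)) / 2 \<le> exp (l^2)"
    using cosh_bound[OF l1] exp_ge_add_one_self[of "l^2"] by linarith
  have "qc n j \<le> ((exp l + exp (-l)) / 2)^n * exp (- l * real_of_int j)" by (rule qc_chernoff)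
  also have "\<dots> \<le> (exp (l^2))^n * exp (- l * real_of_int j)"
    by (intro mult_right_mono power_mono cle c0 exp_ge_zero)
  also have "\<dots> = exp (real n * l^2) * exp (- l * real_of_int j)"
    by (simp only: exp_of_nat_mult)
  also have "\<dots> = exp (real n * l^2 + (- l * real_of_int j))"
    by (simp only: exp_add)
  also have "real n * l^2 + (- l * real_of_int j) = - ((real_of_int j)^2) / (4 * real n)"
  proof -
    have "real n * l^2 = (real_of_int j)^2 / (4 * real n)"
      unfolding l_def power2_eq_square using np by (simp add: field_simps)
    moreover have "l * real_of_int j = (real_of_int j)^2 / (2 * real n)"
      unfolding l_def power2_eq_square by simp
    ultimately show ?thesis by (simp add: field_simps)
  qed
  finally show ?thesis .
qed

lemma Fd_gauss:
  assumes "n \<ge> 1"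
  shows "Fd n a b \<le> exp (- ((real_of_int a)^2 + (real_of_int b)^2) / (4 * real n))"
proof -
  let ?u = "real_of_int (a + b)" and ?v = "real_of_int (a - b)"
  have uv: "?u^2 + ?v^2 = 2 * ((real_of_int a)^2 + (real_of_int b)^2)"
    by (simp add: power2_eq_square algebra_simps)
  have np: "real n > 0" using assms by simp
  show ?thesis
  proof (cases "?v^2 \<le> ?u^2")
    case True
    have "Fd n a b \<le> qc n (a + b)" unfolding Fd_def
      using qc_le1[of n "a - b"] qc_nonneg[of n "a + b"] by (simp add: mult_left_le)
    also have "\<dots> \<le> exp (- (?u^2) / (4 * real n))" by (rule qc_gauss[OF assms])
    also have "\<dots> \<le> exp (- ((real_of_int a)^2 + (real_of_int b)^2) / (4 * real n))"
    proof -
      have "(real_of_int a)^2 + (real_of_int b)^2 \<le> ?u^2" using True uv by (smt (verit))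
      then have "((real_of_int a)^2 + (real_of_int b)^2) / (4 * real n) \<le> ?u^2 / (4 * real n)"
        by (intro divide_right_mono) (use np in auto)
      then have "- (?u^2) / (4 * real n) \<le> - ((real_of_int a)^2 + (real_of_int b)^2) / (4 * real n)"
        unfolding minus_divide_left[symmetric] by (rule le_imp_neg_le)
      then show ?thesis by (rule exp_le_cancel_iff[THEN iffD2])
    qed
    finally show ?thesis .
  next
    case False
    have "Fd n a b \<le> qc n (a - b)" unfolding Fd_def
      using qc_le1[of n "a + b"] qc_nonneg[of n "a - b"] qc_nonneg[of n "a + b"] by (metis mult_left_le_one_le)
    also have "\<dots> \<le> exp (- (?v^2) / (4 * real n))" by (rule qc_gauss[OF assms])
    also have "\<dots> \<le> exp (- ((real_of_int a)^2 + (real_of_int b)^2) / (4 * real n))"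
    proof -
      have "(real_of_int a)^2 + (real_of_int b)^2 \<le> ?v^2" using False uv by (smt (verit))
      then have "((real_of_int a)^2 + (real_of_int b)^2) / (4 * real n) \<le> ?v^2 / (4 * real n)"
        by (intro divide_right_mono) (use np in auto)
      then have "- (?v^2) / (4 * real n) \<le> - ((real_of_int a)^2 + (real_of_int b)^2) / (4 * real n)"
        unfolding minus_divide_left[symmetric] by (rule le_imp_neg_le)
      then show ?thesis by (rule exp_le_cancel_iff[THEN iffD2])
    qed
    finally show ?thesis .
  qed
qed

lemma cw_even: "cw (2 * k) = real ((2 * k) choose k) / 4^k"
  unfolding cw_def by (simp add: power_mult)

lemma binom_step: "(k + 1) * (k + 1) * ((2 * k + 2) choose (k + 1)) = (2 * k + 2) * (2 * k + 1) * ((2 * k) choose k)"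
proof -
  have e1: "Suc k * (Suc (Suc (2 * k)) choose Suc k) = Suc (Suc (2 * k)) * (Suc (2 * k) choose k)"
    by (rule Suc_times_binomial)
  have e2: "Suc k * (Suc (2 * k) choose Suc k) = Suc k * (Suc (2 * k) choose k)"
    using Suc_times_binomial_add[of k k] by (simp only: mult_2)
  have e3: "Suc k * (Suc (2 * k) choose Suc k) = Suc (2 * k) * ((2 * k) choose k)"
    by (rule Suc_times_binomial)
  have e2': "Suc (2 * k) choose Suc k = Suc (2 * k) choose k"
    using e2 by (metis mult_left_cancel nat.distinct(1))
  have s: "2 * k + 2 = Suc (Suc (2 * k))" "k + 1 = Suc k" "2 * k + 1 = Suc (2 * k)" by simp_all
  have "(k + 1) * (k + 1) * ((2 * k + 2) choose (k + 1)) = Suc k * (Suc k * (Suc (Suc (2 * k)) choose Suc k))"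
    unfolding s by (simp only: mult.assoc)
  also have "\<dots> = Suc k * (Suc (Suc (2 * k)) * (Suc (2 * k) choose k))"
    unfolding e1 ..
  also have "\<dots> = Suc (Suc (2 * k)) * (Suc k * (Suc (2 * k) choose Suc k))"
    unfolding e2' by (simp only: mult.left_commute)
  also have "\<dots> = Suc (Suc (2 * k)) * (Suc (2 * k) * ((2 * k) choose k))"
    unfolding e3 ..
  finally show ?thesis unfolding s by (simp only: mult.assoc)
qed

lemma cw_step: "cw (2 * Suc k) = cw (2 * k) * (2 * real k + 1) / (2 * real k + 2)"
proof -
  define c where "c = real ((2 * k) choose k)"
  define X where "X = real ((2 * k + 2) choose (k + 1))"
  have "real ((k + 1) * (k + 1) * ((2 * k + 2) choose (k + 1))) = real ((2 * k + 2) * (2 * k + 1) * ((2 * k) choose k))"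
    using binom_step by (simp only:)
  then have "(real k + 1) * ((real k + 1) * X) = (real k + 1) * (2 * (2 * real k + 1) * c)"
    unfolding X_def c_def by (simp only: of_nat_mult of_nat_add of_nat_1 of_nat_numeral) (simp only: algebra_simps)
  then have "(real k + 1) * X = 2 * (2 * real k + 1) * c"
    by (metis mult_left_cancel add_nonneg_pos of_nat_0_le_iff zero_less_one less_irrefl)
  then have X: "X = 2 * (2 * real k + 1) * c / (real k + 1)"
    by (metis add_nonneg_pos of_nat_0_le_iff zero_less_one less_irrefl nonzero_mult_div_cancel_left)
  have cw1: "cw (2 * Suc k) = X / 4^(k+1)"
    using cw_even[of "Suc k"] unfolding X_def by (simp del: binomial_Suc_Suc)
  have cw0: "cw (2 * k) = c / 4^k" unfolding c_def by (rule cw_even)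
  have nz: "real k + 1 \<noteq> 0" "1 + real k \<noteq> 0" "2 * real k + 2 \<noteq> 0" "2 + 2 * real k \<noteq> 0"
    by (simp_all add: add_nonneg_pos add_pos_nonneg)
  have p: "(0::real) < 4^k" by simp
  have q1: "4 * 4 ^ k + real k * (4 * 4 ^ k) \<noteq> (0::real)"
    using p mult_nonneg_nonneg[of "real k" "4 * 4^k"] by linarith
  have q2: "2 * 4 ^ k + real k * (2 * 4 ^ k) \<noteq> (0::real)"
    using p mult_nonneg_nonneg[of "real k" "2 * 4^k"] by linarith
  show ?thesis unfolding cw1 cw0 X using nz p q1 q2
    by (simp add: field_simps)
qed

definition Pw :: "nat \<Rightarrow> real" where
  "Pw k = (\<Prod>j=1..k. (4 * real j^2) / (4 * real j^2 - 1))"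

lemma Pw_rel: "Pw k * (2 * real k + 1) * (cw (2 * k))^2 = 1"
proof (induction k)
  case 0 then show ?case by (simp add: Pw_def cw_def)
next
  case (Suc k)
  have P: "Pw (Suc k) = Pw k * ((4 * (1 + real k)^2) / (4 * (1 + real k)^2 - 1))"
    unfolding Pw_def by (simp add: prod.nat_ivl_Suc')
  have d: "4 * (1 + real k)^2 - 1 = (2 * real k + 1) * (2 * real k + 3)"
    by (simp add: power2_eq_square algebra_simps)
  have "Pw (Suc k) * (2 * real (Suc k) + 1) * (cw (2 * Suc k))^2
     = (Pw k * (2 * real k + 1) * (cw (2 * k))^2) *
       ((4 * (1 + real k)^2) * (2 * real k + 3) * (2 * real k + 1) / ((2 * real k + 1) * (2 * real k + 3) * (2 * real k + 2)^2))"
    unfolding P cw_step d by (simp add: power2_eq_square field_simps)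
  also have "\<dots> = 1"
  proof -
    have e: "4 * (1 + real k)^2 * (2 * real k + 3) * (2 * real k + 1) = (2 * real k + 1) * (2 * real k + 3) * (2 * real k + 2)^2"
      by (simp add: power2_eq_square algebra_simps)
    have "0 < (2 * real k + 1) * (2 * real k + 3) * (2 * real k + 2)^2" by (intro mult_pos_pos) auto
    then show ?thesis unfolding Suc.IH e by simp
  qed
  finally show ?case .
qed

lemma Pw_pos: "Pw k > 0"
  unfolding Pw_def
proof (intro prod_pos ballI)
  fix j assume "j \<in> {1..k}"
  then have "real j \<ge> 1" by simp
  then have "real j^2 \<ge> 1" by (simp add: one_le_power)
  then have "4 * real j^2 - 1 > 0" by linarith
  then show "4 * real j^2 / (4 * real j^2 - 1) > 0" using \<open>real j \<ge> 1\<close> by simp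
qed

lemma cw_sq_bound:
  assumes "k \<ge> 1"
  shows "(cw (2 * k))^2 \<le> 1 / (pi * real k)"
proof -
  define a where "a k = real k * (cw (2 * k))^2" for k
  have a_alt: "a k = real k / (2 * real k + 1) / Pw k" for k
  proof -
    have "(cw (2 * k))^2 = 1 / (Pw k * (2 * real k + 1))"
      using Pw_rel[of k] Pw_pos[of k] by (simp add: eq_divide_eq mult.commute mult.left_commute)
    then show ?thesis unfolding a_def by simp
  qed
  have inc: "incseq a"
  unfolding incseq_Suc_iff
  proof
    fix k
    have "a (Suc k) = (real k + 1) * (cw (2 * k))^2 * ((2 * real k + 1) / (2 * real k + 2))^2"
      unfolding a_def cw_step by (simp add: power2_eq_square field_simps)
    moreover have "real k \<le> (real k + 1) * ((2 * real k + 1) / (2 * real k + 2))^2"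
    proof -
      have p: "0 < (2 * real k + 2)^2" by simp
      have "real k * (2 * real k + 2)^2 \<le> (real k + 1) * (2 * real k + 1)^2"
        by (simp add: power2_eq_square algebra_simps)
      then have "real k \<le> (real k + 1) * (2 * real k + 1)^2 / (2 * real k + 2)^2"
        using p by (simp add: le_divide_eq)
      then show ?thesis by (simp add: power_divide)
    qed
    ultimately show "a k \<le> a (Suc k)"
    proof -
      assume h1: "a (Suc k) = (real k + 1) * (cw (2 * k))^2 * ((2 * real k + 1) / (2 * real k + 2))^2"
        and h2: "real k \<le> (real k + 1) * ((2 * real k + 1) / (2 * real k + 2))^2"
      have "real k * (cw (2 * k))^2 \<le> ((real k + 1) * ((2 * real k + 1) / (2 * real k + 2))^2) * (cw (2 * k))^2"
        by (rule mult_right_mono[OF h2 zero_le_power2])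
      also have "\<dots> = a (Suc k)" unfolding h1 by (simp only: mult_ac)
      finally show ?thesis unfolding a_def[of k] .
    qed
  qed
  have lim1: "(\<lambda>k. real k / (2 * real k + 1)) \<longlonglongrightarrow> 1 / 2"
    by real_asymp
  have lim2: "Pw \<longlonglongrightarrow> pi / 2"
    using wallis unfolding Pw_def .
  have "a \<longlonglongrightarrow> (1 / 2) / (pi / 2)"
    unfolding a_alt by (intro tendsto_divide lim1 lim2) simp
  then have "a \<longlonglongrightarrow> 1 / pi" by simp
  then have "a k \<le> 1 / pi" using inc incseq_le by blast
  then show ?thesis unfolding a_def using assms by (simp add: field_simps)
qed

lemma sum_pairs:
  fixes g :: "nat \<Rightarrow> real" and a b :: nat
  assumes "a \<le> b"
  shows "(\<Sum>n\<in>{2 * a..<2 * b}. g n) = (\<Sum>k\<in>{a..<b}. g (2 * k) + g (2 * k + 1))"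
  using assms
proof (induction b rule: dec_induct)
  case base then show ?case by simp
next
  case (step b)
  have "{2 * a..<2 * Suc b} = insert (2 * b + 1) (insert (2 * b) {2 * a..<2 * b})"
    using step by auto
  then have "(\<Sum>n\<in>{2 * a..<2 * Suc b}. g n) = g (2 * b + 1) + g (2 * b) + (\<Sum>n\<in>{2 * a..<2 * b}. g n)"
    by simp
  then show ?case using step by simp
qed

lemma sum_parity_bound:
  fixes g W :: "nat \<Rightarrow> real"
  assumes g0: "\<And>n. 0 \<le> g n" and gW: "\<And>n. g n \<le> W (n div 2)"
    and par: "\<And>n. odd (int n + p) \<Longrightarrow> g n = 0"
  shows "(\<Sum>n\<in>{n0..<T}. g n) \<le> (\<Sum>k\<in>{n0 div 2..<T}. W k)"
proof (cases "n0 div 2 \<le> T")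
  case False
  then have "{n0..<T} = {}" by auto
  moreover have "{n0 div 2..<T} = {}" using False by auto
  ultimately show ?thesis by simp
next
  case True
  have "(\<Sum>n\<in>{n0..<T}. g n) \<le> (\<Sum>n\<in>{2 * (n0 div 2)..<2 * T}. g n)"
    by (intro sum_mono2) (auto simp: g0)
  also have "\<dots> = (\<Sum>k\<in>{n0 div 2..<T}. g (2 * k) + g (2 * k + 1))"
    by (rule sum_pairs[OF True])
  also have "\<dots> \<le> (\<Sum>k\<in>{n0 div 2..<T}. W k)"
  proof (intro sum_mono)
    fix k
    have a: "g (2 * k) \<le> W k" using gW[of "2 * k"] by simp
    have b: "g (2 * k + 1) \<le> W k" using gW[of "2 * k + 1"] by simp
    show "g (2 * k) + g (2 * k + 1) \<le> W k"
    proof (cases "odd (int (2 * k) + p)")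
      case True then show ?thesis using par[of "2 * k"] b by simp
    next
      case False then have "odd (int (2 * k + 1) + p)" by simp
      then show ?thesis using par[of "2 * k + 1"] a by simp
    qed
  qed
  finally show ?thesis .
qed

lemma harm_tel:
  assumes "2 \<le> a" "a \<le> b"
  shows "(\<Sum>k\<in>{a..<b}. 1 / real k) \<le> ln (real b - 1) - ln (real a - 1)"
  using assms(2)
proof (induction b rule: dec_induct)
  case base then show ?case by simp
next
  case (step b)
  have b2: "real b \<ge> 2" using step assms by simp
  have "ln ((real b - 1) / real b) \<le> (real b - 1) / real b - 1"
    by (rule ln_le_minus_one) (use b2 in simp)
  also have "\<dots> = - 1 / real b" using b2 by (simp add: field_simps)
  finally have "1 / real b \<le> ln (real b) - ln (real b - 1)"
    using b2 by (simp add: ln_div)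
  then show ?case using step by simp
qed

lemma Fsum_le: "(\<Sum>n\<in>{n0..<T}. Fd n a b) \<le> (\<Sum>k\<in>{n0 div 2..<T}. (cw (2 * k))^2)"
proof (rule sum_parity_bound[where p = "a + b"])
  show "0 \<le> Fd n a b" for n by (rule Fd_nonneg)
  show "Fd n a b \<le> (cw (2 * (n div 2)))^2" for n by (rule Fd_le_cw)
  show "odd (int n + (a + b)) \<Longrightarrow> Fd n a b = 0" for n using Fd_odd[of n a b] by (simp add: add.assoc)
qed

lemma tail_sum:
  assumes "2 \<le> k0" "k0 \<le> T"
  shows "(\<Sum>k\<in>{k0..<T}. (cw (2 * k))^2) \<le> (ln (real T - 1) - ln (real k0 - 1)) / pi"
proof -
  have "(\<Sum>k\<in>{k0..<T}. (cw (2 * k))^2) \<le> (\<Sum>k\<in>{k0..<T}. 1 / real k / pi)"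
  proof (intro sum_mono)
    fix k assume "k \<in> {k0..<T}"
    then have "k \<ge> 1" using assms by simp
    then show "(cw (2 * k))^2 \<le> 1 / real k / pi" using cw_sq_bound[of k] by (simp add: mult.commute)
  qed
  also have "\<dots> = (\<Sum>k\<in>{k0..<T}. 1 / real k) / pi" by (simp add: sum_divide_distrib)
  also have "\<dots> \<le> (ln (real T - 1) - ln (real k0 - 1)) / pi"
    by (intro divide_right_mono harm_tel assms) simp
  finally show ?thesis .
qed

lemma diag_sum:
  assumes "2 \<le> T"
  shows "(\<Sum>k<T. (cw (2 * k))^2) \<le> 1 + (1 + ln (real T)) / pi"
proof -
  have split: "{..<T} = insert 0 (insert 1 {2..<T})" using assms by auto
  have c0: "cw 0 = 1" by (simp add: cw_def)
  have c1: "(cw 2)^2 \<le> 1 / pi" using cw_sq_bound[of 1] by simp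
  have "(\<Sum>k<T. (cw (2 * k))^2) = 1 + (cw 2)^2 + (\<Sum>k\<in>{2..<T}. (cw (2 * k))^2)"
    unfolding split by (simp add: c0)
  also have "\<dots> \<le> 1 + 1 / pi + (ln (real T - 1) - ln (real 2 - 1)) / pi"
    using c1 tail_sum[of 2 T] assms by simp
  also have "\<dots> \<le> 1 + (1 + ln (real T)) / pi"
  proof -
    have "ln (real T - 1) \<le> ln (real T)" using assms by simp
    then show ?thesis by (simp add: add_divide_distrib divide_right_mono)
  qed
  finally show ?thesis .
qed

definition Mg :: "nat \<Rightarrow> real" where
  "Mg N = Max ((\<lambda>(w, z). green N w z) ` (intV N \<times> intV N))"

lemma Mg_ge: "w \<in> intV N \<Longrightarrow> z \<in> intV N \<Longrightarrow> green N w z \<le> Mg N"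
  unfolding Mg_def by (rule Max_ge) (auto simp: finite_intV)

lemma Mg_attained: "intV N \<noteq> {} \<Longrightarrow> \<exists>w\<in>intV N. \<exists>z\<in>intV N. Mg N = green N w z"
proof -
  assume ne: "intV N \<noteq> {}"
  have "Mg N \<in> (\<lambda>(w, z). green N w z) ` (intV N \<times> intV N)"
    unfolding Mg_def by (rule Max_in) (use ne finite_intV in auto)
  then show ?thesis by auto
qed

lemma surv_R:
  assumes "N \<ge> 1" "R \<ge> 1"
  shows "surv N (2 * R * N^2) x \<le> 1 / real R"
proof -
  have "real (2 * R * N^2) * surv N (2 * R * N^2) x \<le> 2 * (real N)^2" by (rule surv_T)
  then have "real R * (2 * (real N)^2) * surv N (2 * R * N^2) x \<le> 1 * (2 * (real N)^2)"
    by (simp add: mult_ac)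
  then have "real R * surv N (2 * R * N^2) x \<le> 1"
    using assms by (simp add: mult_ac)
  then show ?thesis using assms by (simp add: field_simps)
qed

lemma green_pre:
  assumes "N \<ge> 1" "R \<ge> 1" "x \<in> intV N" "y \<in> intV N"
  shows "green N x y \<le> (\<Sum>n<2 * R * N^2. Fd n (fst y - fst x) (snd y - snd x)) + Mg N / real R"
proof -
  let ?T = "2 * R * N^2"
  have "green N x y \<le> (\<Sum>n<?T. killed N n x y) + surv N ?T x * Mg N"
    by (rule green_split_le) (rule Mg_ge[OF _ assms(4)])
  also have "\<dots> \<le> (\<Sum>n<?T. Fd n (fst y - fst x) (snd y - snd x)) + 1 / real R * Mg N"
  proof (intro add_mono sum_mono killed_le_Fd mult_right_mono surv_R assms)
    show "0 \<le> Mg N" using Mg_ge[OF assms(3) assms(3)] green_nonneg[of N x x] by linarith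
  qed
  finally show ?thesis by simp
qed

lemma Mg_bound:
  assumes "N \<ge> 1" "R \<ge> 2" "intV N \<noteq> {}"
  shows "Mg N \<le> real R / (real R - 1) * (1 + (1 + ln (real (2 * R * N^2))) / pi)"
proof -
  let ?T = "2 * R * N^2"
  let ?DS = "1 + (1 + ln (real ?T)) / pi"
  have "1 \<le> R * N^2" using assms by (simp add: one_le_mult_iff one_le_power)
  then have T2: "2 \<le> ?T" by simp
  have b: "green N w z \<le> ?DS + Mg N / real R" if "w \<in> intV N" "z \<in> intV N" for w z
  proof -
    have "(\<Sum>n<?T. Fd n (fst z - fst w) (snd z - snd w)) = (\<Sum>n\<in>{0..<?T}. Fd n (fst z - fst w) (snd z - snd w))"
      by (simp add: atLeast0LessThan)
    also have "\<dots> \<le> (\<Sum>k\<in>{0 div 2..<?T}. (cw (2 * k))^2)" by (rule Fsum_le)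
    also have "\<dots> = (\<Sum>k<?T. (cw (2 * k))^2)" by (simp add: atLeast0LessThan)
    also have "\<dots> \<le> ?DS" by (rule diag_sum[OF T2])
    finally show ?thesis using green_pre[of N R w z] assms that by simp
  qed
  obtain w z where wz: "w \<in> intV N" "z \<in> intV N" "Mg N = green N w z" using Mg_attained[OF assms(3)] by blast
  have "Mg N \<le> ?DS + Mg N / real R" using b[OF wz(1,2)] wz(3) by simp
  then have "Mg N * (real R - 1) \<le> ?DS * real R" using assms by (simp add: field_simps)
  then show ?thesis using assms by (simp add: field_simps)
qed

lemma Fd_0_nz: "a \<noteq> 0 \<or> b \<noteq> 0 \<Longrightarrow> Fd 0 a b = 0"
  unfolding Fd_def qc_0 by auto

lemma green_off:
  assumes "N \<ge> 1" "R \<ge> 2" "x \<in> intV N" "y \<in> intV N"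
    and r: "0 < r2" "r2 \<le> (real_of_int (fst y - fst x))^2 + (real_of_int (snd y - snd x))^2"
    and n0: "4 \<le> n0" "n0 \<le> 2 * R * N^2"
  shows "green N x y \<le> real n0 * exp (- r2 / (4 * real n0))
     + (ln (real (2 * R * N^2) - 1) - ln (real (n0 div 2) - 1)) / pi + Mg N / real R"
proof -
  let ?T = "2 * R * N^2" and ?a = "fst y - fst x" and ?b = "snd y - snd x"
  have "(\<Sum>n<?T. Fd n ?a ?b) = (\<Sum>n<n0. Fd n ?a ?b) + (\<Sum>n\<in>{n0..<?T}. Fd n ?a ?b)"
  proof -
    have "(\<Sum>n\<in>{0..<n0}. Fd n ?a ?b) + (\<Sum>n\<in>{n0..<?T}. Fd n ?a ?b) = (\<Sum>n\<in>{0..<?T}. Fd n ?a ?b)"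
      by (rule sum.atLeastLessThan_concat) (use n0 in auto)
    then show ?thesis by (simp only: atLeast0LessThan)
  qed
  also have "(\<Sum>n<n0. Fd n ?a ?b) \<le> (\<Sum>n<n0. exp (- r2 / (4 * real n0)))"
  proof (intro sum_mono)
    fix n assume "n \<in> {..<n0}"
    then have nn0: "n < n0" by simp
    show "Fd n ?a ?b \<le> exp (- r2 / (4 * real n0))"
    proof (cases "n = 0")
      case True
      have "?a \<noteq> 0 \<or> ?b \<noteq> 0" using r by auto
      then have "Fd 0 ?a ?b = 0" by (rule Fd_0_nz)
      then show ?thesis using True by simp
    next
      case False
      then have "Fd n ?a ?b \<le> exp (- ((real_of_int ?a)^2 + (real_of_int ?b)^2) / (4 * real n))"
        using Fd_gauss[of n ?a ?b] by simp
      also have "\<dots> \<le> exp (- r2 / (4 * real n0))"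
      proof -
        have "r2 / (4 * real n0) \<le> r2 / (4 * real n)"
          using False nn0 r by (intro divide_left_mono) auto
        also have "\<dots> \<le> ((real_of_int ?a)^2 + (real_of_int ?b)^2) / (4 * real n)"
          using False r by (intro divide_right_mono) auto
        finally have "- (((real_of_int ?a)^2 + (real_of_int ?b)^2) / (4 * real n)) \<le> - (r2 / (4 * real n0))"
          by (rule le_imp_neg_le)
        then show ?thesis unfolding minus_divide_left by (rule exp_le_cancel_iff[THEN iffD2])
      qed
      finally show ?thesis .
    qed
  qed
  also have "(\<Sum>n<n0. exp (- r2 / (4 * real n0))) = real n0 * exp (- r2 / (4 * real n0))" by simp
  also have "(\<Sum>n\<in>{n0..<?T}. Fd n ?a ?b) \<le> (\<Sum>k\<in>{n0 div 2..<?T}. (cw (2 * k))^2)" by (rule Fsum_le)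
  also have "\<dots> \<le> (ln (real ?T - 1) - ln (real (n0 div 2) - 1)) / pi"
    by (rule tail_sum) (use n0 in auto)
  finally have "(\<Sum>n<?T. Fd n ?a ?b) \<le> real n0 * exp (- r2 / (4 * real n0)) + (ln (real ?T - 1) - ln (real (n0 div 2) - 1)) / pi"
    by simp
  then show ?thesis using green_pre[of N R x y] assms by simp
qed

lemma nd_tail:
  fixes \<sigma> s :: real
  assumes "0 < \<sigma>" "0 < s"
  shows "(\<integral>\<^sup>+x. ennreal (normal_density 0 \<sigma> x) * indicator {s..} x \<partial>lborel)
         \<le> ennreal (\<sigma>^2 / s * normal_density 0 \<sigma> s)"
proof -
  define f where "f x = x / s * normal_density 0 \<sigma> x" for x
  define F where "F x = - (\<sigma>^2 / s) * normal_density 0 \<sigma> x" for x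
  have "(\<integral>\<^sup>+x. ennreal (normal_density 0 \<sigma> x) * indicator {s..} x \<partial>lborel)
     \<le> (\<integral>\<^sup>+x. ennreal (f x) * indicator {s..} x \<partial>lborel)"
  proof (intro nn_integral_mono)
    fix x
    show "ennreal (normal_density 0 \<sigma> x) * indicator {s..} x \<le> ennreal (f x) * indicator {s..} x"
    proof (cases "s \<le> x")
      case True
      then have "1 \<le> x / s" using assms by simp
      then have "normal_density 0 \<sigma> x \<le> f x" unfolding f_def
        using mult_right_mono[OF \<open>1 \<le> x / s\<close> normal_density_nonneg[of 0 \<sigma> x]] by simp
      then show ?thesis using True by (simp add: ennreal_leI)
    qed simp
  qed
  also have "\<dots> = ennreal (0 - F s)"
  proof (rule nn_integral_FTC_atLeast)
    show "f \<in> borel_measurable borel" unfolding f_def by measurable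
    show "DERIV F x :> f x" if "s \<le> x" for x
    proof -
      have "DERIV (\<lambda>x. - (\<sigma>^2 / s) * (1 / sqrt (2 * pi * \<sigma>^2) * exp (- ((x - 0)^2) / (2 * \<sigma>^2)))) x :>
             - (\<sigma>^2 / s) * (1 / sqrt (2 * pi * \<sigma>^2) * (exp (- ((x - 0)^2) / (2 * \<sigma>^2)) * (- (2 * (x - 0) * 1) / (2 * \<sigma>^2))))"
        by (intro derivative_eq_intros) (use assms in \<open>auto simp: power2_eq_square\<close>)
      moreover have "- (\<sigma>^2 / s) * (1 / sqrt (2 * pi * \<sigma>^2) * (exp (- ((x - 0)^2) / (2 * \<sigma>^2)) * (- (2 * (x - 0) * 1) / (2 * \<sigma>^2))))
          = f x"
        unfolding f_def normal_density_def using assms by (simp add: field_simps power2_eq_square)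
      ultimately show ?thesis unfolding F_def normal_density_def by simp
    qed
    show "0 \<le> f x" if "s \<le> x" for x
      unfolding f_def using that assms by (intro mult_nonneg_nonneg divide_nonneg_pos) auto
    show "(F \<longlongrightarrow> 0) at_top"
      unfolding F_def normal_density_def using assms by real_asymp
  qed
  also have "ennreal (0 - F s) = ennreal (\<sigma>^2 / s * normal_density 0 \<sigma> s)"
    unfolding F_def by simp
  finally show ?thesis .
qed

lemma gauss_tail:
  assumes P: "prob_space M" and G: "centered_gaussian M X v"
    and vV: "v \<le> V" and s: "0 < s" and Vs: "V \<le> s^2" and V0: "0 < V"
  shows "measure M {\<omega> \<in> space M. s \<le> X \<omega>} \<le> exp (- (s^2) / (2 * V))"
proof -
  interpret prob_space M by (rule P)
  have Xm: "X \<in> borel_measurable M" and v0: "0 \<le> v" using G unfolding centered_gaussian_def by auto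
  show ?thesis
  proof (cases "v = 0")
    case True
    then have "AE \<omega> in M. X \<omega> = 0" using G unfolding centered_gaussian_def by simp
    then have "AE \<omega> in M. \<not> (s \<le> X \<omega>)" by eventually_elim (use s in simp)
    then have "emeasure M {\<omega> \<in> space M. s \<le> X \<omega>} = 0" by (rule emeasure_eq_0_AE)
    then have "measure M {\<omega> \<in> space M. s \<le> X \<omega>} = 0" by (simp add: measure_def)
    then show ?thesis by simp
  next
    case False
    then have vp: "0 < v" using v0 by simp
    define \<sigma> where "\<sigma> = sqrt v"
    have sp: "0 < \<sigma>" unfolding \<sigma>_def using vp by simp
    have sv: "\<sigma>^2 = v" unfolding \<sigma>_def using vp by simp
    have D: "distributed M lborel X (normal_density 0 \<sigma>)"
      using G False unfolding centered_gaussian_def \<sigma>_def by simp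
    have set_eq: "{\<omega> \<in> space M. s \<le> X \<omega>} = X -` {s..} \<inter> space M" by auto
    have "emeasure M {\<omega> \<in> space M. s \<le> X \<omega>} = (\<integral>\<^sup>+x. ennreal (normal_density 0 \<sigma> x) * indicator {s..} x \<partial>lborel)"
      unfolding set_eq by (rule distributed_emeasure[OF D]) simp
    also have "\<dots> \<le> ennreal (\<sigma>^2 / s * normal_density 0 \<sigma> s)" by (rule nd_tail[OF sp s])
    finally have e: "ennreal (measure M {\<omega> \<in> space M. s \<le> X \<omega>}) \<le> ennreal (\<sigma>^2 / s * normal_density 0 \<sigma> s)"
      by (simp add: emeasure_eq_measure)
    have sq: "sqrt (2 * pi * \<sigma>^2) = sqrt (2 * pi) * \<sigma>"
      using sp by (simp add: real_sqrt_mult)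
    have nd: "\<sigma>^2 / s * normal_density 0 \<sigma> s = (\<sigma> / (s * sqrt (2 * pi))) * exp (- (s^2) / (2 * v))"
      unfolding normal_density_def sq sv[symmetric] using sp s by (simp add: power2_eq_square field_simps)
    have "\<sigma> \<le> s"
    proof -
      have "\<sigma>^2 \<le> s^2" using sv vV Vs by simp
      then show ?thesis using sp s by (simp add: power2_le_iff_abs_le)
    qed
    moreover have "1 \<le> sqrt (2 * pi)" using pi_gt3 by simp
    ultimately have f1: "\<sigma> / (s * sqrt (2 * pi)) \<le> 1"
    proof -
      assume a1: "\<sigma> \<le> s" and a2: "1 \<le> sqrt (2 * pi)"
      have "s * 1 \<le> s * sqrt (2 * pi)" using a2 s by (intro mult_left_mono) auto
      then have "\<sigma> \<le> s * sqrt (2 * pi)" using a1 by simp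
      moreover have "0 < s * sqrt (2 * pi)" using s by simp
      ultimately show ?thesis by (simp add: divide_le_eq_1_pos)
    qed
    have f2: "exp (- (s^2) / (2 * v)) \<le> exp (- (s^2) / (2 * V))"
    proof -
      have "s^2 / (2 * V) \<le> s^2 / (2 * v)" using vp vV by (intro divide_left_mono) auto
      then have "- (s^2 / (2 * v)) \<le> - (s^2 / (2 * V))" by (rule le_imp_neg_le)
      then show ?thesis unfolding minus_divide_left by (rule exp_le_cancel_iff[THEN iffD2])
    qed
    have "measure M {\<omega> \<in> space M. s \<le> X \<omega>} \<le> \<sigma>^2 / s * normal_density 0 \<sigma> s"
      using e by (subst (asm) ennreal_le_iff) (use sp s in auto)
    also have "\<dots> \<le> 1 * exp (- (s^2) / (2 * V))"
      unfolding nd by (intro mult_mono f1 f2) auto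
    finally show ?thesis by simp
  qed
qed

lemma dgff_pair:
  assumes "is_dgff M N \<Phi>" "x \<in> intV N" "y \<in> intV N" "x \<noteq> y"
  shows "centered_gaussian M (\<lambda>\<omega>. \<Phi> x \<omega> + \<Phi> y \<omega>) (green N x x + green N x y + green N y x + green N y y)"
proof -
  define c where "c z = (if z \<in> {x, y} then 1 else (0::real))" for z
  have h: "centered_gaussian M (\<lambda>\<omega>. \<Sum>z\<in>intV N. c z * \<Phi> z \<omega>)
        (\<Sum>z\<in>intV N. \<Sum>w\<in>intV N. c z * c w * green N z w)"
    using assms(1) unfolding is_dgff_def by blast
  have sub: "intV N \<inter> {x, y} = {x, y}" using assms by auto
  have s1: "(\<Sum>z\<in>intV N. c z * \<Phi> z \<omega>) = \<Phi> x \<omega> + \<Phi> y \<omega>" for \<omega>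
  proof -
    have "(\<Sum>z\<in>intV N. c z * \<Phi> z \<omega>) = (\<Sum>z\<in>intV N. if z \<in> {x, y} then \<Phi> z \<omega> else 0)"
      unfolding c_def by (intro sum.cong) auto
    also have "\<dots> = (\<Sum>z\<in>intV N \<inter> {x, y}. \<Phi> z \<omega>)"
      by (rule sum.inter_restrict[symmetric]) (rule finite_intV)
    also have "\<dots> = \<Phi> x \<omega> + \<Phi> y \<omega>" unfolding sub using assms by simp
    finally show ?thesis .
  qed
  have s2: "(\<Sum>z\<in>intV N. \<Sum>w\<in>intV N. c z * c w * green N z w) = green N x x + green N x y + green N y x + green N y y"
  proof -
    have i: "(\<Sum>w\<in>intV N. c z * c w * green N z w) = c z * (green N z x + green N z y)" for z
    proof -
      have "(\<Sum>w\<in>intV N. c z * c w * green N z w) = (\<Sum>w\<in>intV N. c z * (if w \<in> {x, y} then green N z w else 0))"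
        unfolding c_def by (intro sum.cong) auto
      also have "\<dots> = c z * (\<Sum>w\<in>intV N. if w \<in> {x, y} then green N z w else 0)"
        by (rule sum_distrib_left[symmetric])
      also have "(\<Sum>w\<in>intV N. if w \<in> {x, y} then green N z w else 0) = (\<Sum>w\<in>intV N \<inter> {x, y}. green N z w)"
        by (rule sum.inter_restrict[symmetric]) (rule finite_intV)
      also have "\<dots> = green N z x + green N z y" unfolding sub using assms by simp
      finally show ?thesis .
    qed
    have "(\<Sum>z\<in>intV N. \<Sum>w\<in>intV N. c z * c w * green N z w) = (\<Sum>z\<in>intV N. if z \<in> {x, y} then green N z x + green N z y else 0)"
      unfolding i by (intro sum.cong refl) (simp add: c_def)
    also have "\<dots> = (\<Sum>z\<in>intV N \<inter> {x, y}. green N z x + green N z y)"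
      by (rule sum.inter_restrict[symmetric]) (rule finite_intV)
    also have "\<dots> = green N x x + green N x y + green N y x + green N y y" unfolding sub using assms by simp
    finally show ?thesis .
  qed
  show ?thesis using h unfolding s1 s2 .
qed

lemma Ffun_star:
  assumes "0 < \<beta>" "\<beta> < 1"
  shows "Ffun 2 \<beta> (2 / (2 - \<beta>)) = 2 / (2 - \<beta>)"
proof -
  define u where "u = 2 - \<beta>"
  have u: "u > 0" "u \<noteq> 0" unfolding u_def using assms by auto
  have b: "\<beta> \<noteq> 0" using assms by simp
  have e1: "1 - 2 / u * (1 - \<beta>) = \<beta> / u" using u unfolding u_def by (simp add: field_simps)
  have A: "(2 / u)^2 * (1 - \<beta>) = 4 * (1 - \<beta>) / u^2" by (simp add: power_divide)
  have B: "2 * (\<beta> / u)^2 / \<beta> = 2 * \<beta> / u^2" using b by (simp add: power_divide power2_eq_square)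
  have C: "4 * (1 - \<beta>) / u^2 + 2 * \<beta> / u^2 = 2 / u"
  proof -
    have "4 * (1 - \<beta>) / u^2 + 2 * \<beta> / u^2 = (2 * u) / u^2" unfolding u_def by (simp add: add_divide_distrib[symmetric] algebra_simps)
    also have "\<dots> = 2 / u" using u by (simp add: power2_eq_square)
    finally show ?thesis .
  qed
  have "Ffun 2 \<beta> (2 / u) = (2 / u)^2 * (1 - \<beta>) + 2 * (\<beta> / u)^2 / \<beta>"
    unfolding Ffun_def e1 by simp
  also have "\<dots> = 2 / u" unfolding A B C ..
  finally show ?thesis unfolding u_def .
qed

lemma ptnorm_sq: "(ptnorm (x - y))^2 = (real_of_int (fst y - fst x))^2 + (real_of_int (snd y - snd x))^2"
proof -
  have "(ptnorm (x - y))^2 = (real_of_int (fst x - fst y))^2 + (real_of_int (snd x - snd y))^2"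
    unfolding ptnorm_def by (simp add: fst_diff snd_diff)
  also have "\<dots> = (real_of_int (fst y - fst x))^2 + (real_of_int (snd y - snd x))^2"
    by (simp add: power2_commute)
  finally show ?thesis .
qed

lemma ptnorm_nonneg: "0 \<le> ptnorm z"
  unfolding ptnorm_def by simp

lemma distc_bdry:
  assumes "x \<in> bdry N"
  shows "distc N x \<le> 1"
proof -
  obtain z where z: "z \<in> nbrs x" "z \<notin> VN N" using assms unfolding bdry_def by blast
  have "ptnorm (x - z) = 1" using z(1) unfolding nbrs_def ptnorm_def by (auto simp: fst_diff snd_diff)
  then have "1 \<in> {ptnorm (x - z) | z. z \<notin> VN N}" unfolding mem_Collect_eq by (intro exI[of _ z]) (use z(2) in simp)
  moreover have "bdd_below {ptnorm (x - z) | z. z \<notin> VN N}"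
    by (rule bdd_belowI[where m=0]) (auto simp: ptnorm_nonneg)
  ultimately show ?thesis unfolding distc_def by (rule cInf_lower)
qed

lemma VNl_intV:
  assumes "1 < l * real N" "x \<in> VNl N l"
  shows "x \<in> intV N"
proof -
  have x: "x \<in> VN N" "l * real N \<le> distc N x" using assms(2) unfolding VNl_def by auto
  have "x \<notin> bdry N" using distc_bdry[of x N] x assms(1) by linarith
  then show ?thesis using x unfolding intV_def by simp
qed

lemma var_bound:
  fixes N R n0 :: nat and r2 Na :: real
  assumes N: "N \<ge> 1" and R: "R \<ge> 2" and xy: "x \<in> intV N" "y \<in> intV N"
    and r: "0 < r2" "r2 \<le> (ptnorm (x - y))^2"
    and n0: "4 \<le> n0" "n0 \<le> 2 * R * N^2" "real n0 * exp (- r2 / (4 * real n0)) \<le> 1"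
    and Na: "0 < Na" "Na / 8 \<le> real (n0 div 2) - 1"
  shows "green N x x + green N x y + green N y x + green N y y
     \<le> 2 * (real R + 1) / (real R - 1) * (1 + (1 + ln (real (2 * R * N^2))) / pi)
        + 2 * (1 + (ln (real (2 * R * N^2)) - ln (Na / 8)) / pi)"
proof -
  let ?T = "2 * R * N^2"
  let ?DS = "1 + (1 + ln (real ?T)) / pi"
  have Rr: "real R \<ge> 2" using R by simp
  have ne: "intV N \<noteq> {}" using xy by auto
  have M: "Mg N \<le> real R / (real R - 1) * ?DS" by (rule Mg_bound[OF N R ne])
  have T1: "real ?T \<ge> 2"
  proof -
    have "1 \<le> R * N^2" using N R by (simp add: one_le_mult_iff one_le_power)
    then have "real (1::nat) \<le> real (R * N^2)" by (simp only: of_nat_le_iff)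
    then show ?thesis by simp
  qed
  have lnT: "ln (real ?T - 1) - ln (real (n0 div 2) - 1) \<le> ln (real ?T) - ln (Na / 8)"
  proof -
    have "ln (real ?T - 1) \<le> ln (real ?T)" using T1 by simp
    moreover have "ln (Na / 8) \<le> ln (real (n0 div 2) - 1)" using Na by simp
    ultimately show ?thesis by linarith
  qed
  have off: "green N a b \<le> 1 + (ln (real ?T) - ln (Na / 8)) / pi + Mg N / real R"
    if ab: "(a = x \<and> b = y) \<or> (a = y \<and> b = x)" for a b
  proof -
    have abI: "a \<in> intV N" "b \<in> intV N" using ab xy by auto
    have "r2 \<le> (real_of_int (fst b - fst a))^2 + (real_of_int (snd b - snd a))^2"
    proof -
      have "(ptnorm (x - y))^2 = (ptnorm (a - b))^2"
        using ab unfolding ptnorm_sq by (auto simp: power2_commute)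
      then show ?thesis using r(2) unfolding ptnorm_sq by simp
    qed
    then have "green N a b \<le> real n0 * exp (- r2 / (4 * real n0))
       + (ln (real ?T - 1) - ln (real (n0 div 2) - 1)) / pi + Mg N / real R"
      by (intro green_off N R abI r(1) n0(1,2))
    also have "\<dots> \<le> 1 + (ln (real ?T) - ln (Na / 8)) / pi + Mg N / real R"
      using n0(3) lnT by (intro add_mono divide_right_mono) auto
    finally show ?thesis .
  qed
  have d1: "green N x x \<le> Mg N" "green N y y \<le> Mg N" using Mg_ge xy by auto
  define Q where "Q = (ln (real ?T) - ln (Na / 8)) / pi"
  have o1: "green N x y \<le> 1 + Q + Mg N / real R" using off[of x y] unfolding Q_def by simp
  have o2: "green N y x \<le> 1 + Q + Mg N / real R" using off[of y x] unfolding Q_def by simp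
  have "green N x x + green N x y + green N y x + green N y y
      \<le> 2 * (Mg N * (1 + 1 / real R)) + 2 * (1 + Q)"
  proof -
    have "Mg N * (1 + 1 / real R) = Mg N + Mg N / real R" by (simp add: algebra_simps)
    then show ?thesis using d1 o1 o2 by argo
  qed
  also have "\<dots> \<le> 2 * ((real R / (real R - 1) * ?DS) * (1 + 1 / real R)) + 2 * (1 + Q)"
    using M Rr by (intro add_mono mult_right_mono mult_left_mono) auto
  also have "2 * ((real R / (real R - 1) * ?DS) * (1 + 1 / real R)) = 2 * (real R + 1) / (real R - 1) * ?DS"
    using Rr by (simp add: field_simps)
  finally show ?thesis unfolding Q_def .
qed

lemma exponent_ineq:
  fixes \<alpha> \<beta> \<delta> \<eta> :: real
  assumes "0 < \<alpha>" "\<alpha> < 1" "0 < \<beta>" "\<beta> < 1" "0 \<le> \<eta>" "\<eta> \<le> \<delta> / 2"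
  shows "4 * \<alpha>^2 / (2 - \<beta>) - \<delta> \<le> 8 * \<alpha>^2 / (2 * (2 - \<beta>) + \<eta>)"
proof -
  define u where "u = 2 - \<beta>"
  have u: "1 < u" "u < 2" using assms unfolding u_def by auto
  have a2: "\<alpha>^2 \<le> 1" using assms by (simp add: power_le_one)
  have a0: "0 \<le> \<alpha>^2" by simp
  have "4 * \<alpha>^2 / u - 8 * \<alpha>^2 / (2 * u + \<eta>) = 4 * \<alpha>^2 * \<eta> / (u * (2 * u + \<eta>))"
    using u assms by (simp add: field_simps)
  also have "\<dots> \<le> 4 * 1 * \<eta> / (1 * 2)"
  proof (rule frac_le)
    show "0 \<le> 4 * 1 * \<eta>" using assms by simp
    show "4 * \<alpha>^2 * \<eta> \<le> 4 * 1 * \<eta>" using a2 assms by (intro mult_right_mono) auto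
    show "0 < 1 * (2::real)" by simp
    show "1 * 2 \<le> u * (2 * u + \<eta>)" using u assms by (intro mult_mono) auto
  qed
  also have "\<dots> \<le> \<delta>" using assms by simp
  finally show ?thesis unfolding u_def by simp
qed

lemma final_exp:
  fixes L D k c :: real
  assumes "0 \<le> L" "0 < D" "0 < k" "0 \<le> c"
  shows "- (c * L^2 / (D * L + k)) \<le> c * k / D^2 - (c / D) * L"
proof -
  have p: "0 < D * L + k" using assms by (simp add: add_nonneg_pos)
  have "(D * L + k) * (L / D - k / D^2) = L^2 - k^2 / D^2"
    using assms by (simp add: power2_eq_square field_simps)
  also have "\<dots> \<le> L^2" by simp
  finally have "L / D - k / D^2 \<le> L^2 / (D * L + k)"
    using p by (simp add: le_divide_eq mult.commute)
  then have "c * (L / D - k / D^2) \<le> c * (L^2 / (D * L + k))"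
    using assms by (intro mult_left_mono) auto
  then show ?thesis by (simp add: algebra_simps)
qed

lemma var_simpl:
  fixes R N :: nat and a g D c1 c3 \<beta> \<epsilon>0 :: real
  assumes R: "R \<ge> 2" and N: "N \<ge> 2" and a: "a = 2 * \<beta> * (1 - \<epsilon>0) - \<epsilon>0"
    and b: "0 < \<beta>" "\<beta> < 1" "0 < \<epsilon>0"
    and g: "g = 2 / pi" and c1: "c1 = 1 + (1 + ln (2 * real R)) / pi"
    and c3: "c3 = 2 * (real R + 1) / (real R - 1) * c1 + 2 * (1 + (ln (2 * real R) + ln 8) / pi)"
    and D: "D = 4 - 2 * \<beta> + 3 * \<epsilon>0 + 4 / (real R - 1)"
  shows "2 * (real R + 1) / (real R - 1) * (1 + (1 + ln (real (2 * R * N^2))) / pi)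
        + 2 * (1 + (ln (real (2 * R * N^2)) - ln (real N powr a / 8)) / pi)
        \<le> g * D * ln (real N) + c3"
proof -
  define L where "L = ln (real N)"
  have L0: "0 \<le> L" unfolding L_def using N by simp
  have Rr: "real R - 1 > 0" using R by simp
  have lnT: "ln (real (2 * R * N^2)) = ln (2 * real R) + 2 * L"
    unfolding L_def using R N by (simp add: ln_mult ln_realpow)
  have lnNa: "ln (real N powr a / 8) = a * L - ln 8"
    unfolding L_def using N by (simp add: ln_div ln_powr)
  have "2 * (real R + 1) / (real R - 1) * (1 + (1 + ln (real (2 * R * N^2))) / pi)
        + 2 * (1 + (ln (real (2 * R * N^2)) - ln (real N powr a / 8)) / pi)
      = c3 + g * L * (2 * (real R + 1) / (real R - 1) + 2 - a)"
  proof -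
    define q where "q = 2 * (real R + 1) / (real R - 1)"
    show ?thesis unfolding lnT lnNa c3 c1 g q_def[symmetric] by (simp add: field_simps)
  qed
  also have "\<dots> \<le> c3 + g * L * D"
  proof -
    have "2 * (real R + 1) / (real R - 1) = 2 + 4 / (real R - 1)" using Rr by (simp add: field_simps)
    moreover have "2 - a \<le> 2 - 2 * \<beta> + 3 * \<epsilon>0"
    proof -
      have "\<beta> * \<epsilon>0 \<le> \<epsilon>0" using b by (simp add: mult_le_cancel_right1)
      then show ?thesis unfolding a by (simp add: algebra_simps)
    qed
    ultimately have "2 * (real R + 1) / (real R - 1) + 2 - a \<le> D" unfolding D by linarith
    moreover have "0 \<le> g * L" using g L0 by simp
    ultimately show ?thesis by (simp add: mult_left_mono)
  qed
  finally show ?thesis unfolding L_def by (simp add: mult_ac)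
qed

lemma main_fixed:
  fixes l \<delta> \<alpha> \<beta> \<epsilon>0 :: real
  assumes l: "0 < l" and \<delta>: "0 < \<delta>" and \<alpha>: "0 < \<alpha>" "\<alpha> < \<beta>" and \<beta>: "\<beta> < 1"
    and e0: "0 < \<epsilon>0" "\<epsilon>0 \<le> \<beta> / 4" "\<epsilon>0 \<le> \<delta> / 12"
  shows "\<exists>C>0. \<forall>\<epsilon>. 0 < \<epsilon> \<and> \<epsilon> \<le> \<epsilon>0 \<longrightarrow> (\<forall>N \<ge> 1. \<forall>(M :: 'a measure) \<Phi>. is_dgff M N \<Phi> \<longrightarrow>
        (\<forall>(x, y) \<in> Sset N l \<beta> \<epsilon>.
           measure M {\<omega> \<in> space M. x \<in> HN N l \<alpha> \<Phi> \<omega> \<and> y \<in> HN N l \<alpha> \<Phi> \<omega>}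
           \<le> C * real N powr (- 2 * \<alpha>\<^sup>2 * Ffun 2 \<beta> (2 / (2 - \<beta>)) + \<delta>)))"
proof -
  have \<beta>0: "0 < \<beta>" using \<alpha> by simp
  define R :: nat where "R = nat \<lceil>16 / \<delta>\<rceil> + 2"
  have R2: "R \<ge> 2" unfolding R_def by simp
  have Rr: "real R - 1 \<ge> 16 / \<delta>"
  proof -
    have "16 / \<delta> \<le> real_of_int \<lceil>16 / \<delta>\<rceil>" by (rule le_of_int_ceiling)
    moreover have "real_of_int \<lceil>16 / \<delta>\<rceil> = real (nat \<lceil>16 / \<delta>\<rceil>)" using \<delta> by simp
    ultimately show ?thesis unfolding R_def by simp
  qed
  have eta1: "4 / (real R - 1) \<le> \<delta> / 4"
  proof -
    have p: "0 < 16 / \<delta>" using \<delta> by simp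
    have pp: "0 < (real R - 1) * (16 / \<delta>)" using p R2 by (intro mult_pos_pos) auto
    have "4 / (real R - 1) \<le> 4 / (16 / \<delta>)" by (rule divide_left_mono[OF Rr _ pp]) simp
    also have "\<dots> = \<delta> / 4" by simp
    finally show ?thesis .
  qed
  define a where "a = 2 * \<beta> * (1 - \<epsilon>0) - \<epsilon>0"
  have e0q: "\<epsilon>0 < 1 / 4" using e0 \<beta> by simp
  have a0: "0 < a"
  proof -
    have h: "2 * \<beta> * (3 / 4) \<le> 2 * \<beta> * (1 - \<epsilon>0)" using e0q \<beta>0 by (intro mult_left_mono) auto
    show ?thesis unfolding a_def using h e0 by argo
  qed
  have a2: "a < 2"
  proof -
    have h: "2 * \<beta> * (1 - \<epsilon>0) \<le> 2 * \<beta> * 1" using e0 \<beta>0 by (intro mult_left_mono) auto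
    show ?thesis unfolding a_def using h \<beta> e0 by argo
  qed
  define g :: real where "g = 2 / pi"
  have g0: "0 < g" unfolding g_def by simp
  define c1 where "c1 = 1 + (1 + ln (2 * real R)) / pi"
  define c3 where "c3 = 2 * (real R + 1) / (real R - 1) * c1 + 2 * (1 + (ln (2 * real R) + ln 8) / pi)"
  define D where "D = 4 - 2 * \<beta> + 3 * \<epsilon>0 + 4 / (real R - 1)"
  have R1: "0 < real R - 1" using R2 by simp
  have c1p: "0 < c1" unfolding c1_def using R2 by (simp add: add_pos_nonneg)
  have c3p: "0 < c3" unfolding c3_def using R1 c1p by (intro add_pos_pos mult_pos_pos divide_pos_pos) (auto simp: add_pos_nonneg)
  have D0: "0 < D" unfolding D_def using \<beta> e0 R1 by (simp add: add_pos_nonneg)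
  define E where "E = - 2 * \<alpha>\<^sup>2 * Ffun 2 \<beta> (2 / (2 - \<beta>)) + \<delta>"
  have E_eq: "E = - (4 * \<alpha>^2 / (2 - \<beta>)) + \<delta>"
    unfolding E_def Ffun_star[OF \<beta>0 \<beta>] by (simp add: field_simps)
  define e where "e = 8 * \<alpha>^2 / D"
  have eE: "- e \<le> E"
  proof -
    have D2: "D = 2 * (2 - \<beta>) + (3 * \<epsilon>0 + 4 / (real R - 1))" unfolding D_def by simp
    have "4 * \<alpha>^2 / (2 - \<beta>) - \<delta> \<le> 8 * \<alpha>^2 / (2 * (2 - \<beta>) + (3 * \<epsilon>0 + 4 / (real R - 1)))"
      using \<alpha> \<beta> \<beta>0 e0 eta1 R1 by (intro exponent_ineq) auto
    then show ?thesis unfolding E_eq e_def D2 by simp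
  qed
  have E4: "-4 \<le> E"
  proof -
    have "\<alpha>^2 \<le> 1" using \<alpha> \<beta> by (simp add: power_le_one)
    moreover have "1 \<le> 2 - \<beta>" using \<beta> by simp
    ultimately have "4 * \<alpha>^2 / (2 - \<beta>) \<le> 4"
      by (simp add: divide_le_eq)
    then show ?thesis unfolding E_eq using \<delta> by simp
  qed
  have ev: "eventually (\<lambda>N. 1 < l * real N \<and> 16 \<le> real N powr a
      \<and> real N powr a * exp (- (real N powr \<epsilon>0) / 4) \<le> 1
      \<and> g * D * ln (real N) + c3 \<le> 16 * g * \<alpha>^2 * (ln (real N))^2 \<and> 2 \<le> N) sequentially"
  proof (intro eventually_conj)
    show "eventually (\<lambda>N. 1 < l * real N) sequentially" using l by real_asymp
    show "eventually (\<lambda>N. 16 \<le> real N powr a) sequentially" using a0 by real_asymp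
    show "eventually (\<lambda>N. real N powr a * exp (- (real N powr \<epsilon>0) / 4) \<le> 1) sequentially"
      using a0 e0 by real_asymp
    have "0 < 16 * g * \<alpha>^2" using g0 \<alpha> by simp
    then show "eventually (\<lambda>N. g * D * ln (real N) + c3 \<le> 16 * g * \<alpha>^2 * (ln (real N))^2) sequentially"
      by real_asymp
    show "eventually (\<lambda>N. 2 \<le> N) sequentially" by (rule eventually_ge_at_top)
  qed
  then obtain N1 where N1: "\<And>N. N \<ge> N1 \<Longrightarrow> 1 < l * real N \<and> 16 \<le> real N powr a
      \<and> real N powr a * exp (- (real N powr \<epsilon>0) / 4) \<le> 1
      \<and> g * D * ln (real N) + c3 \<le> 16 * g * \<alpha>^2 * (ln (real N))^2 \<and> 2 \<le> N"
    unfolding eventually_sequentially by blast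
  define C0 where "C0 = exp (8 * \<alpha>^2 * (c3 / g) / D^2)"
  define C where "C = C0 + (real N1 + 1)^4"
  have C0p: "0 < C0" unfolding C0_def by simp
  have Cp: "0 < C" unfolding C_def using C0p by (simp add: add_pos_nonneg)
  show ?thesis
  proof (intro exI[of _ C] conjI allI impI)
    show "0 < C" by (rule Cp)
    fix \<epsilon> :: real and N :: nat and M :: "'a measure" and \<Phi>
    assume eps: "0 < \<epsilon> \<and> \<epsilon> \<le> \<epsilon>0" and N: "1 \<le> N" and dg: "is_dgff M N \<Phi>"
    have key: "measure M {\<omega> \<in> space M. x \<in> HN N l \<alpha> \<Phi> \<omega> \<and> y \<in> HN N l \<alpha> \<Phi> \<omega>}
           \<le> C * real N powr (- 2 * \<alpha>\<^sup>2 * Ffun 2 \<beta> (2 / (2 - \<beta>)) + \<delta>)"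
      if pS: "(x, y) \<in> Sset N l \<beta> \<epsilon>" for x y
    proof -
    have S: "x \<in> VNl N l" "y \<in> VNl N l" "real N powr (\<beta> * (1 - \<epsilon>)) \<le> ptnorm (x - y)"
      using pS unfolding Sset_def by auto
    interpret prob_space M using dg unfolding is_dgff_def by blast
    let ?A = "{\<omega> \<in> space M. x \<in> HN N l \<alpha> \<Phi> \<omega> \<and> y \<in> HN N l \<alpha> \<Phi> \<omega>}"
    have P1: "measure M ?A \<le> 1" by (rule prob_le_1)
    have NE: "0 < real N powr E" using N by simp
    have goal: "measure M ?A \<le> C * real N powr E"
    proof (cases "N \<ge> N1")
      case False
      have "real N powr (-4) \<le> real N powr E" using N E4 by (intro powr_mono) auto
      moreover have "real N powr (-4) = 1 / (real N)^4" using N by (simp add: powr_minus powr_realpow inverse_eq_divide)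
      ultimately have a1: "1 / (real N)^4 \<le> real N powr E" by simp
      have "(real N)^4 \<le> (real N1 + 1)^4" using False by (intro power_mono) auto
      then have "1 \<le> (real N1 + 1)^4 * (1 / (real N)^4)" using N by (simp add: field_simps)
      also have "\<dots> \<le> (real N1 + 1)^4 * real N powr E" using a1 by (intro mult_left_mono) auto
      also have "\<dots> \<le> C * real N powr E" unfolding C_def using C0p NE by (intro mult_right_mono) auto
      finally show ?thesis using P1 by linarith
    next
      case True
      note big = N1[OF True]
      have N2: "2 \<le> N" and lN: "1 < l * real N" and Na16: "16 \<le> real N powr a"
        and Na1: "real N powr a * exp (- (real N powr \<epsilon>0) / 4) \<le> 1"
        and VS: "g * D * ln (real N) + c3 \<le> 16 * g * \<alpha>^2 * (ln (real N))^2" using big by auto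
      have xI: "x \<in> intV N" and yI: "y \<in> intV N" using VNl_intV[OF lN] S by auto
      define L where "L = ln (real N)"
      have L0: "0 < L" unfolding L_def using N2 by simp
      have dist1: "real N powr (\<beta> * (1 - \<epsilon>0)) \<le> ptnorm (x - y)"
      proof -
        have "\<beta> * (1 - \<epsilon>0) \<le> \<beta> * (1 - \<epsilon>)" using eps \<beta>0 by (intro mult_left_mono) auto
        then have "real N powr (\<beta> * (1 - \<epsilon>0)) \<le> real N powr (\<beta> * (1 - \<epsilon>))" using N by (intro powr_mono) auto
        then show ?thesis using S(3) by linarith
      qed
      define r2 where "r2 = real N powr (a + \<epsilon>0)"
      have r2p: "0 < r2" unfolding r2_def using N by simp
      have r2le: "r2 \<le> (ptnorm (x - y))^2"
      proof -
        have "r2 = (real N powr (\<beta> * (1 - \<epsilon>0)))^2"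
          unfolding r2_def a_def power2_eq_square using N by (simp add: powr_add[symmetric] algebra_simps)
        also have "\<dots> \<le> (ptnorm (x - y))^2" using dist1 by (intro power_mono) auto
        finally show ?thesis .
      qed
      define Na where "Na = real N powr a"
      define n0 where "n0 = nat \<lfloor>Na\<rfloor>"
      have Na0: "0 < Na" unfolding Na_def using N by simp
      have n0le: "real n0 \<le> Na" unfolding n0_def using Na0 by simp
      have n0ge: "Na - 1 < real n0" unfolding n0_def using Na0 by linarith
      have n04: "4 \<le> n0" using n0ge Na16 unfolding Na_def by linarith
      have n0T: "n0 \<le> 2 * R * N^2"
      proof -
        have "Na \<le> real N powr 2" unfolding Na_def using N a2 by (intro powr_mono) auto
        also have "\<dots> = (real N)^2" using N by (simp add: powr_realpow)
        also have "\<dots> \<le> real (2 * R * N^2)"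
        proof -
          have "1 \<le> 2 * real R" using R2 by simp
          then have "1 * (real N)^2 \<le> (2 * real R) * (real N)^2" by (intro mult_right_mono) auto
          then show ?thesis by simp
        qed
        finally show ?thesis using n0le by linarith
      qed
      have n0exp: "real n0 * exp (- r2 / (4 * real n0)) \<le> 1"
      proof -
        have n0p: "0 < real n0" using n04 by simp
        have "r2 / (4 * Na) \<le> r2 / (4 * real n0)" using n0le n0p r2p by (intro divide_left_mono) auto
        then have "exp (- r2 / (4 * real n0)) \<le> exp (- r2 / (4 * Na))" by simp
        then have h1: "real n0 * exp (- r2 / (4 * real n0)) \<le> Na * exp (- r2 / (4 * Na))"
          using n0le n0p by (intro mult_mono) auto
        have r2e: "r2 = Na * real N powr \<epsilon>0" unfolding r2_def Na_def by (rule powr_add)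
        have "- r2 / (4 * Na) = - (real N powr \<epsilon>0) / 4"
          unfolding r2e using Na0 by (simp add: field_simps)
        then have "Na * exp (- r2 / (4 * Na)) = real N powr a * exp (- (real N powr \<epsilon>0) / 4)"
          unfolding Na_def by simp
        then show ?thesis using h1 Na1 by linarith
      qed
      have n0div: "Na / 8 \<le> real (n0 div 2) - 1"
      proof -
        have "n0 \<le> 2 * (n0 div 2) + 1" by simp
        then have "real n0 \<le> 2 * real (n0 div 2) + 1" by linarith
        then show ?thesis using n0ge Na16 unfolding Na_def by linarith
      qed
      define v where "v = green N x x + green N x y + green N y x + green N y y"
      define V where "V = g * D * L + c3"
      have vV: "v \<le> V"
      proof -
        have "v \<le> 2 * (real R + 1) / (real R - 1) * (1 + (1 + ln (real (2 * R * N^2))) / pi)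
            + 2 * (1 + (ln (real (2 * R * N^2)) - ln (Na / 8)) / pi)"
          unfolding v_def by (rule var_bound[OF N R2 xI yI r2p r2le n04 n0T n0exp Na0 n0div])
        also have "\<dots> \<le> g * D * ln (real N) + c3" unfolding Na_def
          by (rule var_simpl[OF R2 N2 a_def \<beta>0 \<beta> e0(1) g_def c1_def c3_def D_def])
        finally show ?thesis unfolding V_def L_def .
      qed
      have xy: "x \<noteq> y"
      proof
        assume "x = y"
        then have "ptnorm (x - y) = 0" by (simp add: ptnorm_def)
        then show False using dist1 N by simp
      qed
      have G: "centered_gaussian M (\<lambda>\<omega>. \<Phi> x \<omega> + \<Phi> y \<omega>) v"
        unfolding v_def by (rule dgff_pair[OF dg xI yI xy])
      define s where "s = 4 * sqrt g * \<alpha> * L"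
      have s0: "0 < s" unfolding s_def using g0 \<alpha> L0 by simp
      have s2: "s^2 = 16 * g * \<alpha>^2 * L^2" unfolding s_def using g0 by (simp add: power_mult_distrib)
      have V0: "0 < V" unfolding V_def using g0 D0 L0 c3p by (simp add: add_nonneg_pos)
      have Vs: "V \<le> s^2" unfolding s2 V_def L_def using VS .
      have sub: "?A \<subseteq> {\<omega> \<in> space M. s \<le> \<Phi> x \<omega> + \<Phi> y \<omega>}"
      proof
        fix \<omega> assume "\<omega> \<in> ?A"
        then have "2 * sqrt gconst * \<alpha> * ln (real N) \<le> \<Phi> x \<omega>" "2 * sqrt gconst * \<alpha> * ln (real N) \<le> \<Phi> y \<omega>" "\<omega> \<in> space M"
          unfolding HN_def by auto
        moreover have "s = 2 * (2 * sqrt gconst * \<alpha> * ln (real N))" unfolding s_def g_def gconst_def L_def by simp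
        ultimately show "\<omega> \<in> {\<omega> \<in> space M. s \<le> \<Phi> x \<omega> + \<Phi> y \<omega>}" by simp
      qed
      have meas: "{\<omega> \<in> space M. s \<le> \<Phi> x \<omega> + \<Phi> y \<omega>} \<in> sets M"
      proof -
        have "\<forall>z. \<Phi> z \<in> borel_measurable M" using dg unfolding is_dgff_def by blast
        then have "\<Phi> x \<in> borel_measurable M" "\<Phi> y \<in> borel_measurable M" by blast+
        then show ?thesis by measurable
      qed
      have "measure M ?A \<le> measure M {\<omega> \<in> space M. s \<le> \<Phi> x \<omega> + \<Phi> y \<omega>}"
        by (rule finite_measure_mono[OF sub meas])
      also have "\<dots> \<le> exp (- (s^2) / (2 * V))"
        by (rule gauss_tail[OF prob_space_axioms G vV s0 Vs V0])
      also have "\<dots> \<le> C0 * exp (- e * L)"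
      proof -
        have h: "(2 * (8 * g * \<alpha>^2 * L^2)) / (2 * V) = (8 * g * \<alpha>^2 * L^2) / V"
          by (rule mult_divide_mult_cancel_left) simp
        have s2e: "s^2 = 2 * (8 * g * \<alpha>^2 * L^2)" unfolding s2 by simp
        have Veq: "V = (g * D) * L + c3" unfolding V_def by (simp add: mult_ac)
        have "- (s^2) / (2 * V) = - ((2 * (8 * g * \<alpha>^2 * L^2)) / (2 * V))"
          unfolding s2e by (simp only: minus_divide_left)
        also have "\<dots> = - ((8 * g * \<alpha>^2) * L^2 / ((g * D) * L + c3))" unfolding Veq[symmetric] h ..
        also have "\<dots> \<le> (8 * g * \<alpha>^2) * c3 / (g * D)^2 - ((8 * g * \<alpha>^2) / (g * D)) * L"
          using L0 D0 c3p g0 by (intro final_exp) auto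
        also have "(8 * g * \<alpha>^2) * c3 / (g * D)^2 = 8 * \<alpha>^2 * (c3 / g) / D^2"
          using g0 D0 by (simp add: power2_eq_square field_simps)
        also have "(8 * g * \<alpha>^2) / (g * D) = 8 * \<alpha>^2 / D"
          using g0 D0 by (simp add: field_simps)
        finally have "- (s^2) / (2 * V) \<le> 8 * \<alpha>^2 * (c3 / g) / D^2 - (8 * \<alpha>^2 / D) * L" .
        then have "exp (- (s^2) / (2 * V)) \<le> exp (8 * \<alpha>^2 * (c3 / g) / D^2 - (8 * \<alpha>^2 / D) * L)"
          by (rule exp_le_cancel_iff[THEN iffD2])
        also have "exp (8 * \<alpha>^2 * (c3 / g) / D^2 - (8 * \<alpha>^2 / D) * L) = C0 * exp (- e * L)"
          unfolding C0_def by (subst exp_add[symmetric]) (simp add: e_def)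
        finally show ?thesis .
      qed
      also have "\<dots> \<le> C0 * real N powr E"
      proof -
        have "exp (- e * L) = real N powr (- e)" unfolding L_def powr_def using N by simp
        also have "\<dots> \<le> real N powr E" using N eE by (intro powr_mono) auto
        finally show ?thesis using C0p by (intro mult_left_mono) auto
      qed
      also have "\<dots> \<le> C * real N powr E" unfolding C_def using NE by (intro mult_right_mono) auto
      finally show ?thesis .
    qed
    show "measure M ?A \<le> C * real N powr (- 2 * \<alpha>\<^sup>2 * Ffun 2 \<beta> (2 / (2 - \<beta>)) + \<delta>)"
      using goal unfolding E_def .
    qed
    then show "\<forall>(x, y) \<in> Sset N l \<beta> \<epsilon>.
           measure M {\<omega> \<in> space M. x \<in> HN N l \<alpha> \<Phi> \<omega> \<and> y \<in> HN N l \<alpha> \<Phi> \<omega>}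
           \<le> C * real N powr (- 2 * \<alpha>\<^sup>2 * Ffun 2 \<beta> (2 / (2 - \<beta>)) + \<delta>)" by blast
  qed
qed

theorem lemma8p2:
  fixes l \<delta> :: real and K :: "(real \<times> real) set"
  assumes "0 < l" "l < 1/2" "\<delta> > 0"
    and "compact K" "K \<subseteq> {0<..<1} \<times> {0<..<1}"
  shows "\<exists>\<epsilon>0 > 0. \<forall>(\<alpha>, \<beta>) \<in> K. \<alpha> < \<beta> \<longrightarrow>
     (\<exists>C > 0. \<forall>\<epsilon>. 0 < \<epsilon> \<and> \<epsilon> \<le> \<epsilon>0 \<longrightarrow> (\<forall>N \<ge> 1. \<forall>(M :: 'a measure) \<Phi>. is_dgff M N \<Phi> \<longrightarrow>
        (\<forall>(x, y) \<in> Sset N l \<beta> \<epsilon>.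
           measure M {\<omega> \<in> space M. x \<in> HN N l \<alpha> \<Phi> \<omega> \<and> y \<in> HN N l \<alpha> \<Phi> \<omega>}
           \<le> C * real N powr (- 2 * \<alpha>\<^sup>2 * Ffun 2 \<beta> (2 / (2 - \<beta>)) + \<delta>))))"
proof -
  obtain b0 where b0: "0 < b0" "\<forall>p\<in>K. b0 \<le> snd p"
  proof (cases "K = {}")
    case True then show ?thesis using that[of "1/2"] by auto
  next
    case False
    have "compact (snd ` K)" using assms(4)
      by (intro compact_continuous_image continuous_on_snd continuous_on_id)
    moreover have "snd ` K \<noteq> {}" using False by simp
    ultimately obtain m where m: "m \<in> snd ` K" "\<forall>z\<in>snd ` K. m \<le> z"
      using compact_attains_inf by blast
    have "0 < m" using m(1) assms(5) by auto
    then show ?thesis using that[of m] m(2) by auto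
  qed
  define \<epsilon>0 where "\<epsilon>0 = min (b0 / 4) (\<delta> / 12)"
  have e0: "0 < \<epsilon>0" using b0 assms(3) by (simp add: \<epsilon>0_def)
  have key: "\<alpha> < \<beta> \<longrightarrow>
     (\<exists>C > 0. \<forall>\<epsilon>. 0 < \<epsilon> \<and> \<epsilon> \<le> \<epsilon>0 \<longrightarrow> (\<forall>N \<ge> 1. \<forall>(M :: 'a measure) \<Phi>. is_dgff M N \<Phi> \<longrightarrow>
        (\<forall>(x, y) \<in> Sset N l \<beta> \<epsilon>.
           measure M {\<omega> \<in> space M. x \<in> HN N l \<alpha> \<Phi> \<omega> \<and> y \<in> HN N l \<alpha> \<Phi> \<omega>}
           \<le> C * real N powr (- 2 * \<alpha>\<^sup>2 * Ffun 2 \<beta> (2 / (2 - \<beta>)) + \<delta>))))"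
    if ab: "(\<alpha>, \<beta>) \<in> K" for \<alpha> \<beta>
  proof
    assume lt: "\<alpha> < \<beta>"
    have a0: "0 < \<alpha>" and b1: "\<beta> < 1" using ab assms(5) by auto
    have "b0 \<le> \<beta>" using b0(2) ab by force
    then have e1: "\<epsilon>0 \<le> \<beta> / 4" unfolding \<epsilon>0_def by simp
    have e2: "\<epsilon>0 \<le> \<delta> / 12" unfolding \<epsilon>0_def by simp
    show "\<exists>C > 0. \<forall>\<epsilon>. 0 < \<epsilon> \<and> \<epsilon> \<le> \<epsilon>0 \<longrightarrow> (\<forall>N \<ge> 1. \<forall>(M :: 'a measure) \<Phi>. is_dgff M N \<Phi> \<longrightarrow>
        (\<forall>(x, y) \<in> Sset N l \<beta> \<epsilon>.
           measure M {\<omega> \<in> space M. x \<in> HN N l \<alpha> \<Phi> \<omega> \<and> y \<in> HN N l \<alpha> \<Phi> \<omega>}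
           \<le> C * real N powr (- 2 * \<alpha>\<^sup>2 * Ffun 2 \<beta> (2 / (2 - \<beta>)) + \<delta>)))"
      by (rule main_fixed[OF assms(1) assms(3) a0 lt b1 e0 e1 e2])
  qed
  show ?thesis
    by (intro exI[of _ \<epsilon>0] conjI e0) (use key in blast)
qed

end
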